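(* Let $M$ be a connected matroid, let $N$ be a minor of $M$ with no loops and no coloops, and let $(A,B)$ be a $2$-separation of $M$ with $B\cap E(N)=\{f\}$. If $f$ is not in series or in parallel with any other element of $M$, then there exists an element $e\in B\setminus\{f\}$ such that both $M\setminus e$ and $M/e$ have $N$ as a minor.
   Context: $\lambda_M(X) = \rank_M(X) + \rank_M(E(M)\setminus X) - \rank(M)$. A $2$-separation of $M$ is a partition $(A,B)$ of $E(M)$ with $|A|,|B|\geq 2$ and $\lambda_M(A)<2$. "$M'$ has $N$ as a minor" means $N$ itself (with labelled ground set) equals $M'/C\setminus D$ for some disjoint $C,D\subseteq E(M')$. *)

theory Defs
  imports Main
begin

text \<open>The predicate is required to vanish outside subsets of the ground set, so
  that equality of matroids (as records) is the usual equality of labelled matroids.\<close>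

record 'a matroid =
  ground :: "'a set"
  indep  :: "'a set \<Rightarrow> bool"

definition matroid :: "'a matroid \<Rightarrow> bool" where
  "matroid M \<longleftrightarrow>
     finite (ground M) \<and>
     (\<forall>I. indep M I \<longrightarrow> I \<subseteq> ground M) \<and>
     indep M {} \<and>
     (\<forall>I J. indep M J \<and> I \<subseteq> J \<longrightarrow> indep M I) \<and>
     (\<forall>I J. indep M I \<and> indep M J \<and> card I < card J \<longrightarrow>
        (\<exists>x \<in> J - I. indep M (insert x I)))"

definition rank :: "'a matroid \<Rightarrow> 'a set \<Rightarrow> nat" where
  "rank M X = Max {card I | I. I \<subseteq> X \<and> indep M I}"

definition basis :: "'a matroid \<Rightarrow> 'a set \<Rightarrow> bool" where
  "basis M B \<longleftrightarrow> indep M B \<and> (\<forall>J. indep M J \<and> B \<subseteq> J \<longrightarrow> J = B)"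

definition circuit :: "'a matroid \<Rightarrow> 'a set \<Rightarrow> bool" where
  "circuit M C \<longleftrightarrow> C \<subseteq> ground M \<and> \<not> indep M C \<and> (\<forall>x \<in> C. indep M (C - {x}))"

definition dual :: "'a matroid \<Rightarrow> 'a matroid" where
  "dual M = \<lparr>ground = ground M,
             indep = (\<lambda>I. I \<subseteq> ground M \<and> (\<exists>B. basis M B \<and> I \<inter> B = {}))\<rparr>"

definition cocircuit :: "'a matroid \<Rightarrow> 'a set \<Rightarrow> bool" where
  "cocircuit M C \<longleftrightarrow> circuit (dual M) C"

definition loop :: "'a matroid \<Rightarrow> 'a \<Rightarrow> bool" where
  "loop M e \<longleftrightarrow> circuit M {e}"

definition coloop :: "'a matroid \<Rightarrow> 'a \<Rightarrow> bool" where
  "coloop M e \<longleftrightarrow> cocircuit M {e}"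

definition in_parallel :: "'a matroid \<Rightarrow> 'a \<Rightarrow> 'a \<Rightarrow> bool" where
  "in_parallel M e f \<longleftrightarrow> e \<noteq> f \<and> circuit M {e, f}"

definition in_series :: "'a matroid \<Rightarrow> 'a \<Rightarrow> 'a \<Rightarrow> bool" where
  "in_series M e f \<longleftrightarrow> e \<noteq> f \<and> cocircuit M {e, f}"

definition connected :: "'a matroid \<Rightarrow> bool" where
  "connected M \<longleftrightarrow>
     (\<forall>e \<in> ground M. \<forall>f \<in> ground M. e \<noteq> f \<longrightarrow> (\<exists>C. circuit M C \<and> e \<in> C \<and> f \<in> C))"

definition deletion :: "'a matroid \<Rightarrow> 'a set \<Rightarrow> 'a matroid" where
  "deletion M D = \<lparr>ground = ground M - D,
                   indep = (\<lambda>I. indep M I \<and> I \<subseteq> ground M - D)\<rparr>"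

definition contraction :: "'a matroid \<Rightarrow> 'a set \<Rightarrow> 'a matroid" where
  "contraction M C = \<lparr>ground = ground M - C,
                      indep = (\<lambda>I. I \<subseteq> ground M - C \<and>
                                   rank M (I \<union> C) = card I + rank M C)\<rparr>"

definition is_minor :: "'a matroid \<Rightarrow> 'a matroid \<Rightarrow> bool" where
  "is_minor N M \<longleftrightarrow>
     (\<exists>C D. C \<subseteq> ground M \<and> D \<subseteq> ground M \<and> C \<inter> D = {} \<and>
            N = deletion (contraction M C) D)"

definition conn_fn :: "'a matroid \<Rightarrow> 'a set \<Rightarrow> int" where
  "conn_fn M X = int (rank M X) + int (rank M (ground M - X)) - int (rank M (ground M))"

definition two_separation :: "'a matroid \<Rightarrow> 'a set \<Rightarrow> 'a set \<Rightarrow> bool" where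
  "two_separation M A B \<longleftrightarrow>
     A \<inter> B = {} \<and> A \<union> B = ground M \<and> card A \<ge> 2 \<and> card B \<ge> 2 \<and> conn_fn M A < 2"

end

theory Submission
  imports Defs
begin


section \<open>Rank basics\<close>

lemma m_finite: "matroid M \<Longrightarrow> finite (ground M)"
  by (simp add: matroid_def)
lemma m_sub: "matroid M \<Longrightarrow> indep M I \<Longrightarrow> I \<subseteq> ground M"
  by (simp add: matroid_def)
lemma m_empty: "matroid M \<Longrightarrow> indep M {}"
  by (simp add: matroid_def)
lemma m_subset: "matroid M \<Longrightarrow> indep M J \<Longrightarrow> I \<subseteq> J \<Longrightarrow> indep M I"
  unfolding matroid_def by blast
lemma m_aug: "matroid M \<Longrightarrow> indep M I \<Longrightarrow> indep M J \<Longrightarrow> card I < card J \<Longrightarrow> \<exists>x\<in>J - I. indep M (insert x I)"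
  unfolding matroid_def by blast
lemma m_indep_finite: "matroid M \<Longrightarrow> indep M I \<Longrightarrow> finite I"
  using m_sub m_finite finite_subset by blast

lemma rank_set_finite:
  assumes "matroid M"
  shows "finite {card I | I. I \<subseteq> X \<and> indep M I}"
proof -
  have "{card I | I. I \<subseteq> X \<and> indep M I} \<subseteq> card ` Pow (ground M)"
    using m_sub[OF assms] by blast
  thus ?thesis using m_finite[OF assms] finite_subset by blast
qed

lemma rank_ge:
  assumes "matroid M" "I \<subseteq> X" "indep M I"
  shows "card I \<le> rank M X"
  unfolding rank_def using rank_set_finite[OF assms(1)] assms(2,3)
  by (intro Max_ge) auto

lemma rank_attained:
  assumes "matroid M"
  shows "\<exists>I. I \<subseteq> X \<and> indep M I \<and> card I = rank M X"
proof -
  have ne: "card {} \<in> {card I | I. I \<subseteq> X \<and> indep M I}" unfolding mem_Collect_eq by (rule exI[of _ "{}"]) (simp add: m_empty[OF assms])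
  hence ne2: "{card I | I. I \<subseteq> X \<and> indep M I} \<noteq> {}" by auto
  have "rank M X \<in> {card I | I. I \<subseteq> X \<and> indep M I}"
    unfolding rank_def by (rule Max_in[OF rank_set_finite[OF assms] ne2])
  then obtain I where "rank M X = card I" "I \<subseteq> X" "indep M I" by auto
  thus ?thesis by auto
qed

lemma rank_mono:
  assumes "matroid M" "X \<subseteq> Y"
  shows "rank M X \<le> rank M Y"
  using rank_attained[OF assms(1), of X] rank_ge[OF assms(1)] assms(2) by (metis order_trans)

lemma rank_le_card:
  assumes "matroid M" "finite X"
  shows "rank M X \<le> card X"
  using rank_attained[OF assms(1), of X] assms(2) by (metis card_mono)

lemma rank_indep:
  assumes "matroid M" "indep M I"
  shows "rank M I = card I"
  using rank_ge[OF assms(1) _ assms(2), of I] rank_le_card[OF assms(1) m_indep_finite[OF assms]] by simp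

lemma indep_of_rank:
  assumes "matroid M" "finite I" "rank M I = card I"
  shows "indep M I"
proof -
  obtain J where J: "J \<subseteq> I" "indep M J" "card J = rank M I" using rank_attained[OF assms(1)] by blast
  then have "J = I" using assms by (metis card_subset_eq)
  thus ?thesis using J by simp
qed

lemma rank_extend:
  assumes "matroid M" "indep M I" "I \<subseteq> X"
  shows "\<exists>J. I \<subseteq> J \<and> J \<subseteq> X \<and> indep M J \<and> card J = rank M X"
  using assms(2,3)
proof (induction "rank M X - card I" arbitrary: I rule: less_induct)
  case less
  show ?case
  proof (cases "card I < rank M X")
    case True
    obtain J0 where J0: "J0 \<subseteq> X" "indep M J0" "card J0 = rank M X" using rank_attained[OF assms(1)] by blast
    obtain x where x: "x \<in> J0 - I" "indep M (insert x I)" using m_aug[OF assms(1) less.prems(1) J0(2)] True J0(3) by auto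
    have fin: "finite I" using m_indep_finite[OF assms(1) less.prems(1)] .
    have c: "card (insert x I) = card I + 1" using x fin by simp
    have lt: "rank M X - card (insert x I) < rank M X - card I" using c True by simp
    have sub: "insert x I \<subseteq> X" using x(1) J0(1) less.prems(2) by blast
    obtain J where J: "insert x I \<subseteq> J" "J \<subseteq> X" "indep M J" "card J = rank M X"
      using less.hyps[OF lt x(2) sub] by blast
    have "I \<subseteq> J" using J(1) by blast
    thus ?thesis using J by blast
  next
    case False
    then have "card I = rank M X" using rank_ge[OF assms(1) less.prems(2) less.prems(1)] by simp
    thus ?thesis using less.prems by blast
  qed
qed

lemma rank_insert_le:
  assumes "matroid M"
  shows "rank M (insert x X) \<le> rank M X + 1"
proof -
  obtain J where J: "J \<subseteq> insert x X" "indep M J" "card J = rank M (insert x X)" using rank_attained[OF assms] by blast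
  have "indep M (J - {x})" using m_subset[OF assms J(2)] by blast
  moreover have "J - {x} \<subseteq> X" using J(1) by blast
  ultimately have "card (J - {x}) \<le> rank M X" using rank_ge[OF assms] by blast
  moreover have "card J \<le> card (J - {x}) + 1"
  proof (cases "x \<in> J")
    case True
    then show ?thesis using m_indep_finite[OF assms J(2)] by (simp add: card_Diff_singleton)
  next
    case False
    then show ?thesis by simp
  qed
  ultimately show ?thesis using J(3) by simp
qed

lemma rank_submod:
  assumes "matroid M"
  shows "rank M (X \<union> Y) + rank M (X \<inter> Y) \<le> rank M X + rank M Y"
proof -
  obtain I where I: "I \<subseteq> X \<inter> Y" "indep M I" "card I = rank M (X \<inter> Y)" using rank_attained[OF assms] by blast
  obtain J where J: "I \<subseteq> J" "J \<subseteq> X \<union> Y" "indep M J" "card J = rank M (X \<union> Y)"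
    using rank_extend[OF assms I(2), of "X \<union> Y"] I(1) by auto
  have fJ: "finite J" using m_indep_finite[OF assms J(3)] .
  have iX: "indep M (J \<inter> X)" by (rule m_subset[OF assms J(3)]) blast
  have iY: "indep M (J \<inter> Y)" by (rule m_subset[OF assms J(3)]) blast
  have a: "card (J \<inter> X) \<le> rank M X" by (rule rank_ge[OF assms _ iX]) blast
  have b: "card (J \<inter> Y) \<le> rank M Y" by (rule rank_ge[OF assms _ iY]) blast
  have c: "card (J \<inter> X) + card (J \<inter> Y) = card ((J \<inter> X) \<union> (J \<inter> Y)) + card ((J \<inter> X) \<inter> (J \<inter> Y))"
    using card_Un_Int[of "J \<inter> X" "J \<inter> Y"] fJ by simp
  have d: "(J \<inter> X) \<union> (J \<inter> Y) = J" using J(2) by blast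
  have e: "card I \<le> card ((J \<inter> X) \<inter> (J \<inter> Y))" using I(1) J(1) fJ by (intro card_mono) auto
  show ?thesis using a b c d e I(3) J(4) by simp
qed

lemma rank_empty: "matroid M \<Longrightarrow> rank M {} = 0"
  using rank_le_card[of M "{}"] by simp

lemma rank_inter_ground:
  assumes "matroid M"
  shows "rank M X = rank M (X \<inter> ground M)"
proof -
  obtain J where J: "J \<subseteq> X" "indep M J" "card J = rank M X" using rank_attained[OF assms] by blast
  have "J \<subseteq> X \<inter> ground M" using J m_sub[OF assms] by blast
  hence "rank M X \<le> rank M (X \<inter> ground M)" using rank_ge[OF assms _ J(2)] J(3) by simp
  moreover have "rank M (X \<inter> ground M) \<le> rank M X" using rank_mono[OF assms] by blast
  ultimately show ?thesis by simp
qed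

lemma rank_cl_mono:
  assumes "matroid M" "X \<subseteq> Y" "rank M (insert x X) = rank M X"
  shows "rank M (insert x Y) = rank M Y"
proof -
  have "rank M (insert x X \<union> Y) + rank M (insert x X \<inter> Y) \<le> rank M (insert x X) + rank M Y"
    using rank_submod[OF assms(1)] .
  moreover have "insert x X \<union> Y = insert x Y" using assms(2) by blast
  moreover have "rank M X \<le> rank M (insert x X \<inter> Y)" using assms(2) by (intro rank_mono[OF assms(1)]) blast
  moreover have "rank M Y \<le> rank M (insert x Y)" by (intro rank_mono[OF assms(1)]) blast
  ultimately show ?thesis using assms(3) by simp
qed



lemma rank_loop_insert:
  assumes "matroid M" "rank M {e} = 0"
  shows "rank M (insert e X) = rank M X"
  using rank_cl_mono[OF assms(1), of "{}" X e] assms rank_empty[OF assms(1)] by simp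

lemma rank_cl_union:
  assumes "matroid M" "finite W" "\<forall>w\<in>W. rank M (insert w Z) = rank M Z"
  shows "rank M (Z \<union> W) = rank M Z"
  using assms(2,3)
proof (induction W rule: finite_induct)
  case empty
  then show ?case by simp
next
  case (insert w F)
  have h: "rank M (Z \<union> F) = rank M Z" using insert by simp
  have "rank M (insert w (Z \<union> F)) = rank M (Z \<union> F)"
    by (rule rank_cl_mono[OF assms(1), of Z]) (use insert in auto)
  then show ?case using h by simp
qed

lemma basis_card:
  assumes "matroid M" "basis M B"
  shows "card B = rank M (ground M)"
proof -
  have iB: "indep M B" using assms(2) basis_def by blast
  have le: "card B \<le> rank M (ground M)" using rank_ge[OF assms(1) m_sub[OF assms(1) iB] iB] .
  show ?thesis
  proof (rule ccontr)
    assume "card B \<noteq> rank M (ground M)"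
    hence lt: "card B < rank M (ground M)" using le by simp
    obtain J where J: "J \<subseteq> ground M" "indep M J" "card J = rank M (ground M)" using rank_attained[OF assms(1)] by blast
    obtain x where x: "x \<in> J - B" "indep M (insert x B)" using m_aug[OF assms(1) iB J(2)] lt J(3) by auto
    have "insert x B = B" using assms(2) x(2) unfolding basis_def by blast
    thus False using x(1) by blast
  qed
qed

lemma basis_of_card:
  assumes "matroid M" "indep M B" "card B = rank M (ground M)"
  shows "basis M B"
  unfolding basis_def
proof (intro conjI allI impI assms(2))
  fix J assume J: "indep M J \<and> B \<subseteq> J"
  have "card J \<le> rank M (ground M)" using rank_ge[OF assms(1) m_sub[OF assms(1)] ] J by blast
  moreover have "finite J" using m_indep_finite[OF assms(1)] J by blast
  ultimately show "J = B" using J assms(3) by (metis card_seteq)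
qed

lemma basis_exists: "matroid M \<Longrightarrow> \<exists>B. basis M B"
  using rank_attained[of M "ground M"] basis_of_card by blast

lemma dual_indep_iff:
  assumes "matroid M" "I \<subseteq> ground M"
  shows "indep (dual M) I \<longleftrightarrow> rank M (ground M - I) = rank M (ground M)"
proof
  assume "indep (dual M) I"
  then obtain B where B: "basis M B" "I \<inter> B = {}" unfolding dual_def by auto
  have iB: "indep M B" using B(1) basis_def by blast
  have "B \<subseteq> ground M - I" using m_sub[OF assms(1) iB] B(2) by blast
  hence "card B \<le> rank M (ground M - I)" using rank_ge[OF assms(1) _ iB] by blast
  moreover have "rank M (ground M - I) \<le> rank M (ground M)" by (rule rank_mono[OF assms(1)]) blast
  ultimately show "rank M (ground M - I) = rank M (ground M)" using basis_card[OF assms(1) B(1)] by simp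
next
  assume h: "rank M (ground M - I) = rank M (ground M)"
  obtain J where J: "J \<subseteq> ground M - I" "indep M J" "card J = rank M (ground M - I)"
    using rank_attained[OF assms(1)] by blast
  have "basis M J" using basis_of_card[OF assms(1) J(2)] J(3) h by simp
  thus "indep (dual M) I" unfolding dual_def using assms(2) J(1) by auto
qed

lemma indep_iff_rank:
  assumes "matroid M" "finite I"
  shows "indep M I \<longleftrightarrow> rank M I = card I"
  using rank_indep[OF assms(1)] indep_of_rank[OF assms] by blast

lemma in_parallel_of_rank:
  assumes "matroid M" "f \<in> ground M" "g \<in> ground M" "f \<noteq> g"
    "rank M {f} = 1" "rank M {g} = 1" "rank M {f, g} = 1"
  shows "in_parallel M f g"
proof -
  have "indep M {f}" "indep M {g}" using indep_iff_rank[OF assms(1)] assms by auto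
  moreover have "\<not> indep M {f, g}" using indep_iff_rank[OF assms(1)] assms by auto
  ultimately show ?thesis unfolding in_parallel_def circuit_def using assms(2,3,4)
    by (auto simp: insert_Diff_if)
qed

lemma in_series_of_rank:
  assumes "matroid M" "f \<in> ground M" "g \<in> ground M" "f \<noteq> g"
    "rank M (ground M - {f, g}) < rank M (ground M)"
    "rank M (ground M - {f}) = rank M (ground M)" "rank M (ground M - {g}) = rank M (ground M)"
  shows "in_series M f g"
proof -
  have gd: "ground (dual M) = ground M" by (simp add: dual_def)
  have a: "\<not> indep (dual M) {f, g}" using dual_indep_iff[OF assms(1)] assms by simp
  have b: "indep (dual M) {f}" "indep (dual M) {g}" using dual_indep_iff[OF assms(1)] assms by simp_all
  show ?thesis unfolding in_series_def cocircuit_def circuit_def gd using assms(2,3,4) a b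
    by (auto simp: insert_Diff_if)
qed



lemma ground_del[simp]: "ground (deletion X D) = ground X - D" by (simp add: deletion_def)
lemma indep_del[simp]: "indep (deletion X D) I = (indep X I \<and> I \<subseteq> ground X - D)" by (simp add: deletion_def)
lemma ground_con[simp]: "ground (contraction X C) = ground X - C" by (simp add: contraction_def)
lemma indep_con[simp]: "indep (contraction X C) I = (I \<subseteq> ground X - C \<and> rank X (I \<union> C) = card I + rank X C)"
  by (simp add: contraction_def)

lemma meq: "ground (X::'a matroid) = ground Y \<Longrightarrow> indep X = indep Y \<Longrightarrow> X = Y"
  by (cases X, cases Y) simp

lemma del_rank:
  assumes "matroid M" "e \<notin> W"
  shows "rank (deletion M {e}) W = rank M W"
proof -
  have "{card I | I. I \<subseteq> W \<and> indep (deletion M {e}) I} = {card I | I. I \<subseteq> W \<and> indep M I}"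
    using m_sub[OF assms(1)] assms(2) by auto
  thus ?thesis unfolding rank_def by simp
qed

lemma con1_rank:
  assumes "matroid M" "e \<in> ground M" "W \<subseteq> ground M - {e}"
  shows "rank (contraction M {e}) W = rank M (insert e W) - rank M {e}"
proof -
  let ?S = "{card I | I. I \<subseteq> W \<and> indep (contraction M {e}) I}"
  have fW: "finite W" using m_finite[OF assms(1)] assms(3) finite_subset by blast
  have fin: "finite ?S"
  proof -
    have "?S \<subseteq> card ` Pow W" by blast
    thus ?thesis using fW finite_subset by blast
  qed
  have ub: "y \<le> rank M (insert e W) - rank M {e}" if ys: "y \<in> ?S" for y
  proof -
    obtain I where I0: "y = card I" "I \<subseteq> W" "indep (contraction M {e}) I"
      using ys by blast
    have I: "y = card I" "I \<subseteq> W" "rank M (insert e I) = card I + rank M {e}"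
      using I0 by auto
    have "rank M (insert e I) \<le> rank M (insert e W)" using I(2) by (intro rank_mono[OF assms(1)]) blast
    thus ?thesis using I by simp
  qed
  have att: "rank M (insert e W) - rank M {e} \<in> ?S"
  proof (cases "rank M {e} = 0")
    case True
    obtain I where I: "I \<subseteq> W" "indep M I" "card I = rank M W" using rank_attained[OF assms(1)] by blast
    have r1: "rank M (insert e W) = rank M W" using rank_loop_insert[OF assms(1) True] .
    have r2: "rank M (I \<union> {e}) = card I" using rank_loop_insert[OF assms(1) True, of I] rank_indep[OF assms(1) I(2)] by simp
    have "I \<subseteq> W \<and> indep (contraction M {e}) I" using I(1) assms(3) r2 True by auto
    hence "card I \<in> ?S" by blast
    thus ?thesis using r1 I(3) True by simp
  next
    case False
    have r1: "rank M {e} = 1" using False rank_le_card[OF assms(1), of "{e}"] by simp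
    have ie: "indep M {e}" using indep_of_rank[OF assms(1)] r1 by simp
    obtain J where J: "{e} \<subseteq> J" "J \<subseteq> insert e W" "indep M J" "card J = rank M (insert e W)"
      using rank_extend[OF assms(1) ie, of "insert e W"] by auto
    let ?I = "J - {e}"
    have fJ: "finite J" using m_indep_finite[OF assms(1) J(3)] .
    have cI: "card ?I = card J - 1" using J(1) fJ by simp
    have eq: "?I \<union> {e} = J" using J(1) by blast
    have rJ: "rank M J = card J" using rank_indep[OF assms(1) J(3)] .
    have cJ: "card J \<ge> 1" using J(1) fJ by (metis card_mono empty_subsetI insert_subset card_1_singleton_iff One_nat_def)
    have "?I \<subseteq> W \<and> indep (contraction M {e}) ?I" using J(2) assms(3) eq rJ r1 cI cJ by auto
    hence "card ?I \<in> ?S" by blast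
    thus ?thesis using cI J(4) r1 by simp
  qed
  have "Max ?S = rank M (insert e W) - rank M {e}" by (rule Max_eqI[OF fin ub att])
  thus ?thesis by (simp only: rank_def[of "contraction M {e}" W])
qed

lemma minor_del:
  assumes "matroid M" "C \<subseteq> ground M" "D \<subseteq> ground M" "C \<inter> D = {}" "e \<in> D"
  shows "is_minor (deletion (contraction M C) D) (deletion M {e})"
  unfolding is_minor_def
proof (intro exI conjI)
  show "C \<subseteq> ground (deletion M {e})" using assms by auto
  show "D - {e} \<subseteq> ground (deletion M {e})" using assms by auto
  show "C \<inter> (D - {e}) = {}" using assms by auto
  show "deletion (contraction M C) D = deletion (contraction (deletion M {e}) C) (D - {e})"
  proof (rule meq)
    show "ground (deletion (contraction M C) D) = ground (deletion (contraction (deletion M {e}) C) (D - {e}))"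
      using assms by auto
    show "indep (deletion (contraction M C) D) = indep (deletion (contraction (deletion M {e}) C) (D - {e}))"
    proof (rule ext)
      fix I
      show "indep (deletion (contraction M C) D) I = indep (deletion (contraction (deletion M {e}) C) (D - {e})) I"
      proof (cases "I \<subseteq> ground M - C - D")
        case True
        have a: "rank (deletion M {e}) (I \<union> C) = rank M (I \<union> C)" 
          by (rule del_rank[OF assms(1)]) (use True assms in auto)
        have b: "rank (deletion M {e}) C = rank M C"
          by (rule del_rank[OF assms(1)]) (use True assms in auto)
        show ?thesis using True a b assms by auto
      next
        case False
        then show ?thesis using assms by auto
      qed
    qed
  qed
qed

lemma minor_con:
  assumes "matroid M" "C \<subseteq> ground M" "D \<subseteq> ground M" "C \<inter> D = {}" "e \<in> C"
  shows "is_minor (deletion (contraction M C) D) (contraction M {e})"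
  unfolding is_minor_def
proof (intro exI conjI)
  show "C - {e} \<subseteq> ground (contraction M {e})" using assms by auto
  show "D \<subseteq> ground (contraction M {e})" using assms by auto
  show "(C - {e}) \<inter> D = {}" using assms by auto
  show "deletion (contraction M C) D = deletion (contraction (contraction M {e}) (C - {e})) D"
  proof (rule meq)
    show "ground (deletion (contraction M C) D) = ground (deletion (contraction (contraction M {e}) (C - {e})) D)"
      using assms by auto
    show "indep (deletion (contraction M C) D) = indep (deletion (contraction (contraction M {e}) (C - {e})) D)"
    proof (rule ext)
      fix I
      show "indep (deletion (contraction M C) D) I = indep (deletion (contraction (contraction M {e}) (C - {e})) D) I"
      proof (cases "I \<subseteq> ground M - C - D")
        case True
        have eg: "e \<in> ground M" using assms by auto
        have s1: "I \<union> (C - {e}) \<subseteq> ground M - {e}" using True assms by auto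
        have s2: "C - {e} \<subseteq> ground M - {e}" using assms by auto
        have i1: "insert e (I \<union> (C - {e})) = I \<union> C" using assms by auto
        have i2: "insert e (C - {e}) = C" using assms by auto
        have a: "rank (contraction M {e}) (I \<union> (C - {e})) = rank M (I \<union> C) - rank M {e}"
          using con1_rank[OF assms(1) eg s1] i1 by simp
        have b: "rank (contraction M {e}) (C - {e}) = rank M C - rank M {e}"
          using con1_rank[OF assms(1) eg s2] i2 by simp
        have c1: "rank M {e} \<le> rank M C" using assms by (intro rank_mono[OF assms(1)]) auto
        have c2: "rank M C \<le> rank M (I \<union> C)" by (intro rank_mono[OF assms(1)]) auto
        have "(rank M (I \<union> C) - rank M {e} = card I + (rank M C - rank M {e})) = (rank M (I \<union> C) = card I + rank M C)"
          using c1 c2 by arith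
        then show ?thesis using True a b assms by auto
      next
        case False
        then show ?thesis using assms by auto
      qed
    qed
  qed
qed

lemma minor_nonloop:
  assumes "matroid M" "N = deletion (contraction M C) D" "f \<in> ground N" "\<not> loop N f"
  shows "rank M (insert f C) = rank M C + 1"
proof -
  have e: "indep N {}" using assms(2) by simp
  have "indep N {f}" using assms(3,4) e unfolding loop_def circuit_def by auto
  thus ?thesis using assms(2) by simp
qed

lemma minor_noncoloop:
  assumes "matroid M" "C \<subseteq> ground M" "N = deletion (contraction M C) D" "f \<in> ground N" "\<not> coloop N f"
  shows "rank M (insert f ((ground N - {f}) \<union> C)) = rank M ((ground N - {f}) \<union> C)"
proof (rule ccontr)
  let ?G = "ground N"
  assume ne: "rank M (insert f ((?G - {f}) \<union> C)) \<noteq> rank M ((?G - {f}) \<union> C)"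
  have fG: "finite ?G" using assms(3) m_finite[OF assms(1)] by simp
  have isub: "indep N I \<Longrightarrow> I \<subseteq> ?G" for I using assms(3) by auto
  let ?F = "{I. indep N I}"
  have finF: "finite ?F" using fG isub by (metis (no_types, lifting) Collect_mono Pow_def finite_Pow_iff finite_subset)
  have neF: "{} \<in> ?F" using assms(3) by simp
  have finc: "finite (card ` ?F)" using finF by simp
  have nec: "card ` ?F \<noteq> {}" using neF by blast
  obtain Bs where Bs: "Bs \<in> ?F" "card Bs = Max (card ` ?F)" using Max_in[OF finc nec] by auto
  have basisBs: "basis N Bs"
    unfolding basis_def
  proof (intro conjI allI impI)
    show "indep N Bs" using Bs by simp
    fix J assume J: "indep N J \<and> Bs \<subseteq> J"
    have "card J \<le> card Bs" using Bs(2) J finc by (simp add: Max_ge)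
    moreover have "finite J" using J isub fG finite_subset by blast
    ultimately show "J = Bs" using J by (metis card_seteq)
  qed
  have "coloop N f"
    unfolding coloop_def cocircuit_def circuit_def
  proof (intro conjI ballI)
    show "{f} \<subseteq> ground (dual N)" using assms(4) by (simp add: dual_def)
    show "indep (dual N) ({f} - {x})" if "x \<in> {f}" for x using that basisBs assms(4) by (auto simp: dual_def)
    show "\<not> indep (dual N) {f}"
    proof
      assume "indep (dual N) {f}"
      then obtain B where B: "basis N B" "{f} \<inter> B = {}" by (auto simp: dual_def)
      have iB: "indep N B" using B(1) basis_def by blast
      have BG: "B \<subseteq> ?G" using isub[OF iB] .
      have fB: "f \<notin> B" using B(2) by blast
      have rB: "rank M (B \<union> C) = card B + rank M C" using iB assms(3) by simp
      have finB: "finite B" using BG fG finite_subset by blast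
      have "\<not> indep N (insert f B)"
      proof
        assume "indep N (insert f B)"
        hence "insert f B = B" using B(1) unfolding basis_def by blast
        thus False using fB by blast
      qed
      hence "rank M (insert f B \<union> C) \<noteq> card (insert f B) + rank M C"
        using assms(3,4) BG by auto
      hence h1: "rank M (insert f (B \<union> C)) \<noteq> rank M (B \<union> C) + 1" using rB finB fB by simp
      have h2: "rank M (insert f (B \<union> C)) \<le> rank M (B \<union> C) + 1" by (rule rank_insert_le[OF assms(1)])
      have h3: "rank M (B \<union> C) \<le> rank M (insert f (B \<union> C))" by (rule rank_mono[OF assms(1)]) blast
      have cl: "rank M (insert f (B \<union> C)) = rank M (B \<union> C)" using h1 h2 h3 by simp
      have "B \<union> C \<subseteq> (?G - {f}) \<union> C" using BG fB by blast
      from rank_cl_mono[OF assms(1) this cl] ne show False by simp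
    qed
  qed
  thus False using assms(5) by simp
qed



definition rkf :: "'b set \<Rightarrow> ('b set \<Rightarrow> int) \<Rightarrow> bool" where
  "rkf Y R \<longleftrightarrow> R {} = 0 \<and>
     (\<forall>Z x. Z \<subseteq> Y \<longrightarrow> x \<in> Y \<longrightarrow> R Z \<le> R (insert x Z) \<and> R (insert x Z) \<le> R Z + 1) \<and>
     (\<forall>Z W. Z \<subseteq> Y \<longrightarrow> W \<subseteq> Y \<longrightarrow> R (Z \<union> W) + R (Z \<inter> W) \<le> R Z + R W)"

lemma rk_empty: "rkf Y R \<Longrightarrow> R {} = 0" by (simp add: rkf_def)
lemma rk_ins1: "rkf Y R \<Longrightarrow> Z \<subseteq> Y \<Longrightarrow> x \<in> Y \<Longrightarrow> R Z \<le> R (insert x Z)" by (simp add: rkf_def)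
lemma rk_ins2: "rkf Y R \<Longrightarrow> Z \<subseteq> Y \<Longrightarrow> x \<in> Y \<Longrightarrow> R (insert x Z) \<le> R Z + 1" by (simp add: rkf_def)
lemma rk_sub: "rkf Y R \<Longrightarrow> Z \<subseteq> Y \<Longrightarrow> W \<subseteq> Y \<Longrightarrow> R (Z \<union> W) + R (Z \<inter> W) \<le> R Z + R W"
  by (simp add: rkf_def)

lemma rk_add_aux:
  assumes "rkf Y R" "finite D" "Z \<subseteq> Y" "D \<subseteq> Y"
  shows "R Z \<le> R (Z \<union> D) \<and> R (Z \<union> D) \<le> R Z + int (card D)"
  using assms(2,4)
proof (induction D rule: finite_induct)
  case empty
  then show ?case by simp
next
  case (insert x F)
  have IH: "R Z \<le> R (Z \<union> F) \<and> R (Z \<union> F) \<le> R Z + int (card F)" using insert by simp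
  have s: "Z \<union> F \<subseteq> Y" using assms(3) insert by blast
  have xY: "x \<in> Y" using insert by blast
  have "Z \<union> insert x F = insert x (Z \<union> F)" by blast
  moreover have "R (Z \<union> F) \<le> R (insert x (Z \<union> F))" using rk_ins1[OF assms(1) s xY] .
  moreover have "R (insert x (Z \<union> F)) \<le> R (Z \<union> F) + 1" using rk_ins2[OF assms(1) s xY] .
  ultimately show ?case using IH insert by simp
qed

lemma rk_mono:
  assumes "finite Y" "rkf Y R" "Z \<subseteq> W" "W \<subseteq> Y"
  shows "R Z \<le> R W"
proof -
  have "W = Z \<union> (W - Z)" using assms by blast
  moreover have "finite (W - Z)" using assms finite_subset by blast
  ultimately show ?thesis using rk_add_aux[OF assms(2), of "W - Z" Z] assms by auto
qed

lemma rk_addc: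
  assumes "finite Y" "rkf Y R" "Z \<subseteq> W" "W \<subseteq> Y"
  shows "R W \<le> R Z + int (card (W - Z))"
proof -
  have "W = Z \<union> (W - Z)" using assms by blast
  moreover have "finite (W - Z)" using assms finite_subset by blast
  ultimately show ?thesis using rk_add_aux[OF assms(2), of "W - Z" Z] assms by auto
qed

lemma rk_card:
  assumes "finite Y" "rkf Y R" "Z \<subseteq> Y"
  shows "R Z \<le> int (card Z)" "0 \<le> R Z"
  using rk_addc[OF assms(1,2), of "{}" Z] rk_mono[OF assms(1,2), of "{}" Z] assms rk_empty[OF assms(2)] by auto

lemma rk_indep_sub:
  assumes "finite Y" "rkf Y R" "Z \<subseteq> W" "W \<subseteq> Y" "R W = int (card W)"
  shows "R Z = int (card Z)"
proof -
  have fW: "finite W" using assms finite_subset by blast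
  have "card W = card Z + card (W - Z)" using fW assms(3) card_Un_disjoint[of Z "W - Z"]
    by (metis Diff_disjoint Diff_partition finite_Diff finite_subset)
  thus ?thesis using rk_addc[OF assms(1-4)] rk_card[OF assms(1,2), of Z] assms by auto
qed

lemma rk_cl_mono:
  assumes "finite Y" "rkf Y R" "Z \<subseteq> W" "W \<subseteq> Y" "x \<in> Y" "R (insert x Z) = R Z"
  shows "R (insert x W) = R W"
proof -
  have s1: "insert x Z \<subseteq> Y" using assms by blast
  have "R (insert x Z \<union> W) + R (insert x Z \<inter> W) \<le> R (insert x Z) + R W" using rk_sub[OF assms(2) s1 assms(4)] .
  moreover have "insert x Z \<union> W = insert x W" using assms by blast
  moreover have "R Z \<le> R (insert x Z \<inter> W)" by (rule rk_mono[OF assms(1,2)]) (use assms in blast)+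
  moreover have "R W \<le> R (insert x W)" using rk_ins1[OF assms(2,4,5)] .
  ultimately show ?thesis using assms(6) by simp
qed

lemma rk_cl_union:
  assumes "finite Y" "rkf Y R" "Z \<subseteq> Y" "W \<subseteq> Y" "\<forall>w\<in>W. R (insert w Z) = R Z"
  shows "R (Z \<union> W) = R Z"
proof -
  have fW: "finite W" using assms finite_subset by blast
  show ?thesis using fW assms(4,5)
  proof (induction W rule: finite_induct)
    case empty
    then show ?case by simp
  next
    case (insert w F)
    have h: "R (Z \<union> F) = R Z" using insert by simp
    have "R (insert w (Z \<union> F)) = R (Z \<union> F)"
      by (rule rk_cl_mono[OF assms(1,2), of Z]) (use insert assms(3) in auto)
    then show ?case using h by simp
  qed
qed

lemma rk_merge:
  assumes "rkf Y R" "A \<subseteq> Y" "B \<subseteq> Y" "finite Y" "C \<subseteq> A \<inter> B"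
  shows "R (A \<union> B) \<le> R A + R B - R C"
proof -
  have "A \<inter> B \<subseteq> Y" using assms by blast
  hence "R C \<le> R (A \<inter> B)" using rk_mono[OF assms(4,1) assms(5)] by simp
  thus ?thesis using rk_sub[OF assms(1-3)] by simp
qed

lemma rk_dep:
  assumes "finite Y" "rkf Y R"
  shows "Z \<subseteq> Y \<Longrightarrow> (\<forall>e\<in>Z. R (Z - {e}) < R Z) \<Longrightarrow> R Z = int (card Z)"
proof (induction "card Z" arbitrary: Z rule: less_induct)
  case less
  show ?case
  proof (cases "Z = {}")
    case True
    then show ?thesis using rk_empty[OF assms(2)] by simp
  next
    case False
    then obtain e where e: "e \<in> Z" by blast
    have fZ: "finite Z" using less.prems assms finite_subset by blast
    let ?Z' = "Z - {e}"
    have sZ': "?Z' \<subseteq> Y" using less.prems by blast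
    have ins: "insert e ?Z' = Z" using e by blast
    have r1: "R ?Z' = R Z - 1" using less.prems(2) e rk_ins2[OF assms(2) sZ', of e] less.prems(1) ins by fastforce
    have "\<forall>e'\<in>?Z'. R (?Z' - {e'}) < R ?Z'"
    proof
      fix e' assume e': "e' \<in> ?Z'"
      have s2: "Z - {e'} \<subseteq> Y" using less.prems by blast
      have u: "?Z' \<union> (Z - {e'}) = Z" using e' by blast
      have i: "?Z' \<inter> (Z - {e'}) = ?Z' - {e'}" by blast
      have "R Z + R (?Z' - {e'}) \<le> R ?Z' + R (Z - {e'})" using rk_sub[OF assms(2) sZ' s2] u i by simp
      moreover have "R (Z - {e'}) < R Z" using less.prems(2) e' by blast
      ultimately show "R (?Z' - {e'}) < R ?Z'" using r1 by simp
    qed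
    moreover have "card ?Z' < card Z"
    proof -
      have "card Z > 0" using fZ e card_gt_0_iff by blast
      thus ?thesis using fZ e by simp
    qed
    ultimately have "R ?Z' = int (card ?Z')" using less.hyps sZ' by blast
    moreover have "card ?Z' = card Z - 1" using e fZ by simp
    moreover have "card Z \<ge> 1" using e fZ by (metis One_nat_def Suc_leI card_gt_0_iff empty_iff)
    ultimately show ?thesis using r1 by simp
  qed
qed

lemma rkf_restrict:
  assumes "rkf Y R" "Y' \<subseteq> Y" shows "rkf Y' R"
  unfolding rkf_def
proof (intro conjI allI impI)
  show "R {} = 0" using rk_empty[OF assms(1)] .
  fix Z x assume "Z \<subseteq> Y'" "x \<in> Y'"
  hence a: "Z \<subseteq> Y" "x \<in> Y" using assms(2) by auto
  show "R Z \<le> R (insert x Z)" by (rule rk_ins1[OF assms(1) a])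
  show "R (insert x Z) \<le> R Z + 1" by (rule rk_ins2[OF assms(1) a])
next
  fix Z W assume "Z \<subseteq> Y'" "W \<subseteq> Y'"
  hence a: "Z \<subseteq> Y" "W \<subseteq> Y" using assms(2) by auto
  show "R (Z \<union> W) + R (Z \<inter> W) \<le> R Z + R W" by (rule rk_sub[OF assms(1) a])
qed

lemma rkf_contract:
  assumes "rkf Y R" "e \<in> Y"
  shows "rkf (Y - {e}) (\<lambda>Z. R (insert e Z) - R {e})"
  unfolding rkf_def
proof (intro conjI allI impI)
  show "R (insert e {}) - R {e} = 0" by simp
next
  fix Z x assume a: "Z \<subseteq> Y - {e}" "x \<in> Y - {e}"
  have s: "insert e Z \<subseteq> Y" using a assms by blast
  have "insert e (insert x Z) = insert x (insert e Z)" by blast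
  thus "R (insert e Z) - R {e} \<le> R (insert e (insert x Z)) - R {e}"
       "R (insert e (insert x Z)) - R {e} \<le> R (insert e Z) - R {e} + 1"
    using rk_ins1[OF assms(1) s, of x] rk_ins2[OF assms(1) s, of x] a by auto
next
  fix Z W assume a: "Z \<subseteq> Y - {e}" "W \<subseteq> Y - {e}"
  have s: "insert e Z \<subseteq> Y" "insert e W \<subseteq> Y" using a assms by blast+
  have "insert e (Z \<union> W) = insert e Z \<union> insert e W" "insert e (Z \<inter> W) = insert e Z \<inter> insert e W" by blast+
  thus "R (insert e (Z \<union> W)) - R {e} + (R (insert e (Z \<inter> W)) - R {e})
          \<le> R (insert e Z) - R {e} + (R (insert e W) - R {e})"
    using rk_sub[OF assms(1) s] by simp
qed

definition Pk :: "('b set \<Rightarrow> int) \<Rightarrow> 'b \<Rightarrow> 'b \<Rightarrow> 'b set \<Rightarrow> bool" where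
  "Pk R f p Z \<longleftrightarrow> R (insert f Z) = R Z + 1 \<and> R (insert p Z) = R Z + 1 \<and> R (insert f (insert p Z)) = R Z + 1"

definition parR :: "('b set \<Rightarrow> int) \<Rightarrow> 'b \<Rightarrow> 'b \<Rightarrow> bool" where
  "parR R f x \<longleftrightarrow> R {f} = 1 \<and> R {x} = 1 \<and> R {f, x} = 1"

definition serR :: "'b set \<Rightarrow> ('b set \<Rightarrow> int) \<Rightarrow> 'b \<Rightarrow> 'b \<Rightarrow> bool" where
  "serR Y R f x \<longleftrightarrow> R (Y - {f, x}) < R Y \<and> R (Y - {f}) = R Y \<and> R (Y - {x}) = R Y"




lemma card3_le: "card {a, b, c} \<le> 3" by (auto simp: card_insert_if)

lemma core:
  assumes "finite Y" "rkf Y R" "f \<in> Y" "p \<in> Y" "f \<noteq> p" "S \<subseteq> Y - {f, p}" "Pk R f p S"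
    "\<forall>S'. S' \<subseteq> Y - {f, p} \<longrightarrow> Pk R f p S' \<longrightarrow> S' = S" "Y - {f, p} \<noteq> {}"
  shows "\<exists>x \<in> Y - {f, p}. parR R f x \<or> serR Y R f x"
  using assms
proof (induction "card Y" arbitrary: Y R S rule: less_induct)
  case less
  note fin = less.prems(1) and rk = less.prems(2) and fY = less.prems(3) and pY = less.prems(4)
    and fp = less.prems(5) and SXY = less.prems(6) and PS = less.prems(7) and uniq0 = less.prems(8)
    and Xne = less.prems(9)
  have mono: "\<And>A B. A \<subseteq> B \<Longrightarrow> B \<subseteq> Y \<Longrightarrow> R A \<le> R B" by (rule rk_mono[OF fin rk])
  have ins1: "\<And>Z x. Z \<subseteq> Y \<Longrightarrow> x \<in> Y \<Longrightarrow> R Z \<le> R (insert x Z)" by (rule rk_ins1[OF rk])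
  have ins2: "\<And>Z x. Z \<subseteq> Y \<Longrightarrow> x \<in> Y \<Longrightarrow> R (insert x Z) \<le> R Z + 1" by (rule rk_ins2[OF rk])
  have clm: "\<And>Z W x. Z \<subseteq> W \<Longrightarrow> W \<subseteq> Y \<Longrightarrow> x \<in> Y \<Longrightarrow> R (insert x Z) = R Z \<Longrightarrow> R (insert x W) = R W"
    by (rule rk_cl_mono[OF fin rk])
  have indsub: "\<And>Z W. Z \<subseteq> W \<Longrightarrow> W \<subseteq> Y \<Longrightarrow> R W = int (card W) \<Longrightarrow> R Z = int (card Z)"
    by (rule rk_indep_sub[OF fin rk])
  have merge: "\<And>A B C. A \<subseteq> Y \<Longrightarrow> B \<subseteq> Y \<Longrightarrow> C \<subseteq> A \<inter> B \<Longrightarrow> R (A \<union> B) \<le> R A + R B - R C"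
    by (rule rk_merge[OF rk _ _ fin])
  have cardle: "\<And>Z. Z \<subseteq> Y \<Longrightarrow> R Z \<le> int (card Z)" by (rule rk_card(1)[OF fin rk])
  define X where "X = Y - {f, p}"
  define T where "T = X - S"
  have SX: "S \<subseteq> X" using SXY X_def by simp
  have SY: "S \<subseteq> Y" and fS: "f \<notin> S" and pS: "p \<notin> S" using SX X_def by auto
  have TY: "T \<subseteq> Y" and fT: "f \<notin> T" and pT: "p \<notin> T" and ST: "S \<inter> T = {}" using T_def X_def by auto
  have XST: "X = S \<union> T" using T_def SX by auto
  have finS: "finite S" using SY fin finite_subset by blast
  have uniq: "\<And>S'. S' \<subseteq> X \<Longrightarrow> Pk R f p S' \<Longrightarrow> S' = S" using uniq0 X_def by blast
  have P1: "R (insert f S) = R S + 1" and P2: "R (insert p S) = R S + 1"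
    and P3: "R (insert f (insert p S)) = R S + 1" using PS unfolding Pk_def by auto
  have Sind: "R S = int (card S)"
  proof -
    have "\<forall>e\<in>S. R (S - {e}) < R S"
    proof
      fix e assume e: "e \<in> S"
      let ?S' = "S - {e}"
      show "R ?S' < R S"
      proof (rule ccontr)
        assume "\<not> R ?S' < R S"
        moreover have "R ?S' \<le> R S" by (rule mono) (use SY in auto)
        ultimately have eq0: "R ?S' = R S" by simp
        have iS: "insert e ?S' = S" using e by blast
        have eqS: "R (insert e ?S') = R ?S'" using eq0 iS by simp
        have eY: "e \<in> Y" using e SY by blast
        have c1: "R (insert e (insert f ?S')) = R (insert f ?S')"
          by (rule clm[OF _ _ eY eqS]) (use SY fY in auto)
        have c2: "R (insert e (insert p ?S')) = R (insert p ?S')"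
          by (rule clm[OF _ _ eY eqS]) (use SY pY in auto)
        have c3: "R (insert e (insert f (insert p ?S'))) = R (insert f (insert p ?S'))"
          by (rule clm[OF _ _ eY eqS]) (use SY pY fY in auto)
        have j1: "insert e (insert f ?S') = insert f S" using e by auto
        have j2: "insert e (insert p ?S') = insert p S" using e by auto
        have j3: "insert e (insert f (insert p ?S')) = insert f (insert p S)" using e by auto
        have "Pk R f p ?S'" unfolding Pk_def using P1 P2 P3 c1 c2 c3 j1 j2 j3 eq0 by simp
        hence "?S' = S" using uniq[of ?S'] SX by blast
        thus False using e by blast
      qed
    qed
    thus ?thesis using rk_dep[OF fin rk SY] by simp
  qed
  have cfS: "card (insert f S) = card S + 1" using finS fS by simp
  have cpS: "card (insert p S) = card S + 1" using finS pS by simp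
  have fSind: "R (insert f S) = int (card (insert f S))" using P1 Sind cfS by simp
  have pSind: "R (insert p S) = int (card (insert p S))" using P2 Sind cpS by simp
  have fSY: "insert f S \<subseteq> Y" and pSY: "insert p S \<subseteq> Y" using SY fY pY by auto
  have F1: "R (insert f (insert g S)) = R (insert g S)" if g: "g \<in> T" for g
  proof (rule ccontr)
    assume ne: "R (insert f (insert g S)) \<noteq> R (insert g S)"
    have gY: "g \<in> Y" using g TY by blast
    have gS: "insert g S \<subseteq> Y" using gY SY by blast
    let ?a = "R (insert g S)"
    have f1: "R (insert f (insert g S)) = ?a + 1" using ne ins1[OF gS fY] ins2[OF gS fY] by simp
    have fcl: "R (insert f (insert p S)) = R (insert p S)" using P2 P3 by simp
    have gpS: "insert p (insert g S) \<subseteq> Y" using gS pY by blast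
    have fcl2: "R (insert f (insert p (insert g S))) = R (insert p (insert g S))"
      by (rule clm[OF _ gpS fY fcl]) blast
    have m1: "R (insert f (insert g S)) \<le> R (insert f (insert p (insert g S)))"
      by (rule mono) (use gpS fY in auto)
    have f2: "R (insert p (insert g S)) = ?a + 1"
      using fcl2 m1 f1 ins1[OF gS pY] ins2[OF gS pY] by simp
    have f3: "R (insert f (insert p (insert g S))) = ?a + 1" using fcl2 f2 by simp
    have "Pk R f p (insert g S)" unfolding Pk_def using f1 f2 f3 by simp
    moreover have "insert g S \<subseteq> X" using g SX T_def by blast
    ultimately have "insert g S = S" using uniq[of "insert g S"] by blast
    thus False using g T_def by blast
  qed
  have RY: "R Y = int (card S) + 1"
  proof -
    have Yeq: "Y = insert f S \<union> insert p T" using XST X_def fY pY by auto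
    have "\<forall>w\<in>insert p T. R (insert w (insert f S)) = R (insert f S)"
    proof
      fix w assume w: "w \<in> insert p T"
      show "R (insert w (insert f S)) = R (insert f S)"
      proof (cases "w = p")
        case True
        then show ?thesis using P1 P3 by (simp add: insert_commute)
      next
        case False
        hence wT: "w \<in> T" using w by blast
        have wY: "w \<in> Y" using wT TY by blast
        have gS: "insert w S \<subseteq> Y" using wY SY by blast
        have a: "R (insert f (insert w S)) = R (insert w S)" using F1[OF wT] .
        have b: "R (insert w S) \<le> R S + 1" using ins2[OF SY wY] .
        have c: "R (insert f S) \<le> R (insert w (insert f S))" using ins1[OF fSY wY] .
        show ?thesis using a b c P1 by (simp add: insert_commute)
      qed
    qed
    hence "R (insert f S \<union> insert p T) = R (insert f S)"
      using rk_cl_union[OF fin rk fSY, of "insert p T"] pY TY by simp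
    thus ?thesis using Yeq P1 Sind by simp
  qed
  have F3: "R (insert f (insert p (S - {e}))) = int (card S) + 1" if e: "e \<in> S" for e
  proof -
    let ?S' = "S - {e}"
    have cS': "card ?S' = card S - 1" using e finS by simp
    have cS1: "card S \<ge> 1" using e finS by (metis One_nat_def Suc_leI card_gt_0_iff empty_iff)
    have a: "R (insert f ?S') = int (card (insert f ?S'))" by (rule indsub[OF _ fSY fSind]) blast
    have b: "R (insert p ?S') = int (card (insert p ?S'))" by (rule indsub[OF _ pSY pSind]) blast
    have c: "R ?S' = int (card ?S')" by (rule indsub[OF _ SY Sind]) blast
    have ca: "card (insert f ?S') = card S" using cS' cS1 fS finS by simp
    have cb: "card (insert p ?S') = card S" using cS' cS1 pS finS by simp
    have up: "R (insert f (insert p ?S')) \<le> R (insert f (insert p S))" by (rule mono) (use fSY pSY in auto)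
    have lo: "R (insert f ?S') \<le> R (insert f (insert p ?S'))" by (rule mono) (use fSY pSY in auto)
    show ?thesis
    proof (rule ccontr)
      assume ne: "R (insert f (insert p ?S')) \<noteq> int (card S) + 1"
      hence eq: "R (insert f (insert p ?S')) = int (card S)" using up lo a ca P3 Sind by simp
      have "Pk R f p ?S'" unfolding Pk_def using a b c ca cb eq cS' cS1 by simp
      hence "?S' = S" using uniq[of ?S'] SX by blast
      thus False using e by blast
    qed
  qed
  show ?case
  proof (cases "S = {}")
    case True
    then have TX: "T = X" using T_def by simp
    obtain g where g: "g \<in> X" using Xne X_def by blast
    have gT: "g \<in> T" using g TX by simp
    have gY: "g \<in> Y" using g X_def by blast
    have e1: "R {f, g} = R {g}" using F1[OF gT] True by (simp add: insert_commute)
    have rf: "R {f} = 1" using P1 True rk_empty[OF rk] by simp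
    have rg: "R {g} \<le> 1" using ins2[of "{}" g] gY rk_empty[OF rk] by simp
    have rfg: "R {f} \<le> R {f, g}" by (rule mono) (use fY gY in auto)
    have "parR R f g" unfolding parR_def using e1 rf rg rfg by simp
    thus ?thesis using g X_def by blast
  next
    case Sne: False
    show ?thesis
    proof (cases "T = {}")
      case True
      then have SXe: "S = X" using XST by simp
      obtain e where e: "e \<in> S" using Sne by blast
      have Yeq: "Y = insert f (insert p S)" using SXe X_def fY pY by auto
      have eX: "e \<in> X" using e SX by blast
      have s1: "Y - {f, e} = insert p (S - {e})" using Yeq fp fS pS e by auto
      have s2: "Y - {f} = insert p S" using Yeq fp fS pS by auto
      have s3: "Y - {e} = insert f (insert p (S - {e}))" using Yeq fp fS pS e by auto
      have r1: "R (insert p (S - {e})) = int (card (insert p (S - {e})))" by (rule indsub[OF _ pSY pSind]) blast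
      have c1: "card (insert p (S - {e})) = card S" using pS e finS
        by (metis card_Suc_Diff1 card.insert finite_Diff insert_iff Diff_iff)
      have "serR Y R f e" unfolding serR_def using s1 s2 s3 r1 c1 RY P2 Sind F3[OF e] by simp
      thus ?thesis using eX X_def by blast
    next
      case Tne: False
      show ?thesis
      proof (rule ccontr)
        assume H: "\<not> (\<exists>x\<in>Y - {f, p}. parR R f x \<or> serR Y R f x)"
        have Hp: "\<not> parR R f x" if "x \<in> X" for x using H that X_def by blast
        have Hs: "\<not> serR Y R f x" if "x \<in> X" for x using H that X_def by blast
        \<comment> \<open>(m1) triads\<close>
        have m1: "\<exists>x\<in>S. R (Y - {g, f, x}) < R Y \<and> R (Y - {g, x}) = R Y \<and> R (Y - {f, x}) = R Y"
          if g: "g \<in> T" for g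
        proof -
          let ?Y' = "Y - {g}"
          have gY: "g \<in> Y" using g TY by blast
          have gX: "g \<in> X" using g T_def by blast
          have gS: "g \<notin> S" using g T_def by blast
          have c: "card ?Y' < card Y" by (rule card_Diff1_less[OF fin gY])
          have f': "finite ?Y'" using fin by simp
          have r': "rkf ?Y' R" by (rule rkf_restrict[OF rk]) blast
          have fY': "f \<in> ?Y'" and pY': "p \<in> ?Y'" using fY pY gX X_def by auto
          have S': "S \<subseteq> ?Y' - {f, p}" using SXY gS by blast
          have u': "\<forall>S'. S' \<subseteq> ?Y' - {f, p} \<longrightarrow> Pk R f p S' \<longrightarrow> S' = S" using uniq0 by auto
          have ne': "?Y' - {f, p} \<noteq> {}" using Sne S' by blast
          obtain x where x: "x \<in> ?Y' - {f, p}" "parR R f x \<or> serR ?Y' R f x"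
            using less.hyps[OF c f' r' fY' pY' fp S' PS u' ne'] by blast
          have xX: "x \<in> X" using x X_def by blast
          have sr: "serR ?Y' R f x" using x Hp[OF xX] by blast
          have RY': "R ?Y' = R Y"
          proof -
            have "R (insert f S) \<le> R ?Y'" by (rule mono) (use fY' S' in auto)
            moreover have "R ?Y' \<le> R Y" by (rule mono) auto
            ultimately show ?thesis using P1 Sind RY by simp
          qed
          have a1: "R (?Y' - {f, x}) < R Y" and a2: "R (?Y' - {f}) = R Y" and a3: "R (?Y' - {x}) = R Y"
            using sr RY' unfolding serR_def by auto
          have b1: "R (Y - {f}) = R Y"
          proof -
            have "R (?Y' - {f}) \<le> R (Y - {f})" by (rule mono) auto
            moreover have "R (Y - {f}) \<le> R Y" by (rule mono) auto
            ultimately show ?thesis using a2 by simp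
          qed
          have b2: "R (Y - {x}) = R Y"
          proof -
            have "R (?Y' - {x}) \<le> R (Y - {x})" by (rule mono) auto
            moreover have "R (Y - {x}) \<le> R Y" by (rule mono) auto
            ultimately show ?thesis using a3 by simp
          qed
          have b3: "R (Y - {f, x}) = R Y"
          proof (rule ccontr)
            assume "R (Y - {f, x}) \<noteq> R Y"
            moreover have "R (Y - {f, x}) \<le> R Y" by (rule mono) auto
            ultimately have "serR Y R f x" unfolding serR_def using b1 b2 by simp
            thus False using Hs[OF xX] by blast
          qed
          have xS: "x \<in> S"
          proof (rule ccontr)
            assume xS: "x \<notin> S"
            have sub: "insert p S \<subseteq> Y - {g, f, x}" using SY pY gS xS fS fp x g pT by auto
            have fcl: "R (insert f (insert p S)) = R (insert p S)" using P2 P3 by simp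
            have "R (insert f (Y - {g, f, x})) = R (Y - {g, f, x})"
              by (rule clm[OF sub _ fY fcl]) blast
            moreover have "insert f (Y - {g, f, x}) = ?Y' - {x}" using fY x g fT by auto
            moreover have "Y - {g, f, x} = ?Y' - {f, x}" by auto
            ultimately show False using a1 a3 by simp
          qed
          have q0: "Y - {g, f, x} = ?Y' - {f, x}" by auto
          have q1: "R (Y - {g, f, x}) < R Y" using a1 q0 by simp
          have q0': "Y - {g, x} = ?Y' - {x}" by auto
          have q2: "R (Y - {g, x}) = R Y" using a3 q0' by simp
          show ?thesis using xS q1 q2 b3 by blast
        qed
        \<comment> \<open>(m2) triangles\<close>
        have m2: "\<exists>z\<in>T. R {f, e} = 2 \<and> R {z, e} = 2 \<and> R {f, z, e} = 2 \<and> R {f, z} = 2 \<and> R {z} = 1"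
          if e: "e \<in> S" for e
        proof -
          let ?Y' = "Y - {e}"
          let ?R' = "\<lambda>Z. R (insert e Z) - R {e}"
          let ?S' = "S - {e}"
          have eY: "e \<in> Y" using e SY by blast
          have eX: "e \<in> X" using e SX by blast
          have ef: "e \<noteq> f" and ep: "e \<noteq> p" using e fS pS by auto
          have Re: "R {e} = 1"
          proof -
            have "R {e} = int (card {e})" by (rule indsub[OF _ SY Sind]) (use e in blast)
            thus ?thesis by simp
          qed
          have c: "card ?Y' < card Y" by (rule card_Diff1_less[OF fin eY])
          have f': "finite ?Y'" using fin by simp
          have r': "rkf ?Y' ?R'" by (rule rkf_contract[OF rk eY])
          have fY': "f \<in> ?Y'" and pY': "p \<in> ?Y'" using fY pY ef ep by auto
          have S': "?S' \<subseteq> ?Y' - {f, p}" using SXY by blast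
          have iS: "insert e ?S' = S" using e by blast
          have PS': "Pk ?R' f p ?S'"
          proof -
            have "insert e (insert f ?S') = insert f S" "insert e (insert p ?S') = insert p S"
                 "insert e (insert f (insert p ?S')) = insert f (insert p S)" using e by auto
            thus ?thesis unfolding Pk_def using P1 P2 P3 iS by simp
          qed
          have u': "\<forall>Z. Z \<subseteq> ?Y' - {f, p} \<longrightarrow> Pk ?R' f p Z \<longrightarrow> Z = ?S'"
          proof (intro allI impI)
            fix Z assume Z: "Z \<subseteq> ?Y' - {f, p}" "Pk ?R' f p Z"
            have j: "insert e (insert f Z) = insert f (insert e Z)" "insert e (insert p Z) = insert p (insert e Z)"
              "insert e (insert f (insert p Z)) = insert f (insert p (insert e Z))" by auto
            have "Pk R f p (insert e Z)" using Z(2) j unfolding Pk_def by simp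
            moreover have "insert e Z \<subseteq> X" using Z(1) eX X_def by auto
            ultimately have "insert e Z = S" using uniq[of "insert e Z"] by blast
            moreover have "e \<notin> Z" using Z(1) by blast
            ultimately show "Z = ?S'" by auto
          qed
          have ne': "?Y' - {f, p} \<noteq> {}" using Tne TY fT pT e T_def by auto
          obtain z where z: "z \<in> ?Y' - {f, p}" "parR ?R' f z \<or> serR ?Y' ?R' f z"
            using less.hyps[OF c f' r' fY' pY' fp S' PS' u' ne'] by blast
          have zX: "z \<in> X" using z X_def by blast
          have ze: "z \<noteq> e" using z by blast
          have nser: "\<not> serR ?Y' ?R' f z"
          proof
            assume sr: "serR ?Y' ?R' f z"
            have j1: "insert e (?Y' - {f, z}) = Y - {f, z}" using eY ef ze by auto
            have j2: "insert e ?Y' = Y" using eY by auto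
            have j3: "insert e (?Y' - {f}) = Y - {f}" using eY ef by auto
            have j4: "insert e (?Y' - {z}) = Y - {z}" using eY ze by auto
            have "serR Y R f z" using sr j1 j2 j3 j4 unfolding serR_def by simp
            thus False using Hs[OF zX] by blast
          qed
          hence pr: "parR ?R' f z" using z by blast
          have t1: "R {e, f} = 2" and t2: "R {e, z} = 2" and t3: "R {e, f, z} = 2"
            using pr Re unfolding parR_def by simp_all
          have zY: "z \<in> Y" using z by blast
          have rz: "R {z} = 1"
          proof -
            have "R {e, z} \<le> R {z} + 1" using ins2[of "{z}" e] zY eY by (simp add: insert_commute)
            moreover have "R {z} \<le> 1" using ins2[of "{}" z] zY rk_empty[OF rk] by simp
            ultimately show ?thesis using t2 by simp
          qed
          have rf: "R {f} = 1"
          proof -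
            have "R {f} = int (card {f})" by (rule indsub[OF _ fSY fSind]) blast
            thus ?thesis by simp
          qed
          have rfz: "R {f, z} = 2"
          proof -
            have "R {f, z} \<le> R {z} + 1" using ins2[of "{z}" f] zY fY by simp
            moreover have "R {f} \<le> R {f, z}" by (rule mono) (use fY zY in auto)
            moreover have "R {f, z} \<noteq> 1" using Hp[OF zX] rf rz unfolding parR_def by auto
            ultimately show ?thesis using rf rz by simp
          qed
          have zT: "z \<in> T"
          proof (rule ccontr)
            assume "z \<notin> T"
            hence zS: "z \<in> S" using zX XST by blast
            have "R {e, f, z} = int (card {e, f, z})" by (rule indsub[OF _ fSY fSind]) (use zS e in blast)
            moreover have "card {e, f, z} = 3"
            proof -
              have zf: "z \<noteq> f" using zS fS by blast
              thus ?thesis using ef ze zf by auto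
            qed
            ultimately show False using t3 by simp
          qed
          have "R {f, e} = 2" "R {z, e} = 2" "R {f, z, e} = 2" using t1 t2 t3 by (simp_all add: insert_commute)
          thus ?thesis using zT rfz rz by blast
        qed
        \<comment> \<open>(m3) orthogonality\<close>
        have orth: "z = g \<or> x = e"
          if g: "g \<in> T" and x: "x \<in> S" and tr: "R (Y - {g, f, x}) < R Y" "R (Y - {g, x}) = R Y"
            and e: "e \<in> S" and z: "z \<in> T" and tz: "R {f, z, e} = 2" "R {z, e} = 2" for g x e z
        proof (rule ccontr)
          assume ne: "\<not> (z = g \<or> x = e)"
          have zY: "z \<in> Y" and eY: "e \<in> Y" using z e TY SY by auto
          have sub: "{z, e} \<subseteq> Y - {g, f, x}" using ne z e x g fT fS ST zY eY by auto
          have fcl: "R (insert f {z, e}) = R {z, e}" using tz by simp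
          have "R (insert f (Y - {g, f, x})) = R (Y - {g, f, x})" by (rule clm[OF sub _ fY fcl]) blast
          moreover have "insert f (Y - {g, f, x}) = Y - {g, x}" using fY g x fT fS by auto
          ultimately show False using tr by simp
        qed
        obtain e1 where e1: "e1 \<in> S" using Sne by blast
        obtain z1 where z1: "z1 \<in> T" "R {f, e1} = 2" "R {z1, e1} = 2" "R {f, z1, e1} = 2" "R {f, z1} = 2" "R {z1} = 1"
          using m2[OF e1] by blast
        have z1Y: "z1 \<in> Y" and e1Y: "e1 \<in> Y" using z1 e1 TY SY by auto
        have z1S: "z1 \<notin> S" using z1 ST by blast
        have rp: "R {p} = 1"
        proof -
          have "R {p} = int (card {p})" by (rule indsub[OF _ pSY pSind]) blast
          thus ?thesis by simp
        qed
        show False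
        proof (cases "S = {e1}")
          case True
          obtain x where x: "x \<in> S" "R (Y - {z1, f, x}) < R Y" "R (Y - {z1, x}) = R Y" "R (Y - {f, x}) = R Y"
            using m1[OF z1(1)] by blast
          have xe: "x = e1" using x True by blast
          have RY2: "R Y = 2" using RY True by simp
          have a: "R {f, z1} = R {z1} + 1" using z1 by simp
          have rpz: "R {p, z1} = 2"
          proof (rule ccontr)
            assume ne: "R {p, z1} \<noteq> 2"
            have "R {p, z1} \<le> R {z1} + 1" using ins2[of "{z1}" p] z1Y pY by simp
            moreover have "R {p} \<le> R {p, z1}" by (rule mono) (use pY z1Y in auto)
            ultimately have eq: "R (insert z1 {p}) = R {p}" using ne rp z1(6) by (simp add: insert_commute)
            have sub: "{p} \<subseteq> Y - {z1, f, e1}" using pY fp pT pS z1 e1 by auto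
            have "R (insert z1 (Y - {z1, f, e1})) = R (Y - {z1, f, e1})" by (rule clm[OF sub _ z1Y eq]) blast
            moreover have "insert z1 (Y - {z1, f, e1}) = Y - {f, e1}" using z1Y z1 fT z1S e1 by auto
            ultimately show False using x xe by simp
          qed
          have rfpz: "R {f, p, z1} = 2"
          proof -
            have "R {f, z1} \<le> R {f, p, z1}" by (rule mono) (use fY pY z1Y in auto)
            moreover have "R {f, p, z1} \<le> R Y" by (rule mono) (use fY pY z1Y in auto)
            ultimately show ?thesis using z1 RY2 by simp
          qed
          have "Pk R f p {z1}" unfolding Pk_def using z1 rpz rfpz by (simp add: insert_commute)
          moreover have "{z1} \<subseteq> X" using z1 T_def by blast
          ultimately have "{z1} = S" using uniq[of "{z1}"] by blast
          thus False using z1S by blast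
        next
          case False
          then obtain e2 where e2: "e2 \<in> S" "e2 \<noteq> e1" using e1 by blast
          obtain z2 where z2: "z2 \<in> T" "R {f, e2} = 2" "R {z2, e2} = 2" "R {f, z2, e2} = 2" "R {f, z2} = 2" "R {z2} = 1"
            using m2[OF e2(1)] by blast
          have z2Y: "z2 \<in> Y" and e2Y: "e2 \<in> Y" using z2 e2 TY SY by auto
          have z2S: "z2 \<notin> S" using z2 ST by blast
          have fe12: "R {f, e1, e2} = 3"
          proof -
            have "R {f, e1, e2} = int (card {f, e1, e2})" by (rule indsub[OF _ fSY fSind]) (use e1 e2 in blast)
            moreover have "card {f, e1, e2} = 3"
            proof -
              have "f \<noteq> e1" "f \<noteq> e2" using e1 e2 fS by blast+
              thus ?thesis using e2 by auto
            qed
            ultimately show ?thesis by simp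
          qed
          have pe12: "R {p, e1, e2} = 3"
          proof -
            have "R {p, e1, e2} = int (card {p, e1, e2})" by (rule indsub[OF _ pSY pSind]) (use e1 e2 in blast)
            moreover have "card {p, e1, e2} = 3"
            proof -
              have "p \<noteq> e1" "p \<noteq> e2" using e1 e2 pS by blast+
              thus ?thesis using e2 by auto
            qed
            ultimately show ?thesis by simp
          qed
          have z12: "z1 \<noteq> z2"
          proof
            assume zz: "z1 = z2"
            have "R ({f, z1, e1} \<union> {f, z1, e2}) \<le> R {f, z1, e1} + R {f, z1, e2} - R {f, z1}"
              by (rule merge) (use fY z1Y e1Y e2Y in auto)
            hence "R ({f, z1, e1} \<union> {f, z1, e2}) \<le> 2" using z1 z2 zz by simp
            moreover have "R {f, e1, e2} \<le> R ({f, z1, e1} \<union> {f, z1, e2})" by (rule mono) (use fY z1Y e1Y e2Y in auto)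
            ultimately show False using fe12 by simp
          qed
          obtain x1 where x1: "x1 \<in> S" "R (Y - {z1, f, x1}) < R Y" "R (Y - {z1, x1}) = R Y"
            using m1[OF z1(1)] by blast
          obtain x2 where x2: "x2 \<in> S" "R (Y - {z2, f, x2}) < R Y" "R (Y - {z2, x2}) = R Y"
            using m1[OF z2(1)] by blast
          have x1e: "x1 = e2" using orth[OF z1(1) x1(1) x1(2) x1(3) e2(1) z2(1) z2(4) z2(3)] z12 by auto
          have x2e: "x2 = e1" using orth[OF z2(1) x2(1) x2(2) x2(3) e1 z1(1) z1(4) z1(3)] z12 by auto
          have Seq: "S = {e1, e2}"
          proof (rule ccontr)
            assume "S \<noteq> {e1, e2}"
            then obtain e3 where e3: "e3 \<in> S" "e3 \<noteq> e1" "e3 \<noteq> e2" using e1 e2 by blast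
            obtain z3 where z3: "z3 \<in> T" "R {f, e3} = 2" "R {z3, e3} = 2" "R {f, z3, e3} = 2" "R {f, z3} = 2" "R {z3} = 1"
              using m2[OF e3(1)] by blast
            have "z3 = z1" using orth[OF z1(1) x1(1) x1(2) x1(3) e3(1) z3(1) z3(4) z3(3)] x1e e3 by auto
            moreover have "z3 = z2" using orth[OF z2(1) x2(1) x2(2) x2(3) e3(1) z3(1) z3(4) z3(3)] x2e e3 by auto
            ultimately show False using z12 by simp
          qed
          have RY3: "R Y = 3" using RY Seq e2 by simp
          have fpe1: "R {f, p, e1} = 3"
          proof -
            have "insert f (insert p (S - {e2})) = {f, p, e1}" using Seq e2 by auto
            thus ?thesis using F3[OF e2(1)] Seq e2 by simp
          qed
          have fpe2: "R {f, p, e2} = 3"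
          proof -
            have "insert f (insert p (S - {e1})) = {f, p, e2}" using Seq e2 by auto
            thus ?thesis using F3[OF e1] Seq e2 by simp
          qed
          have l1: "R {e1, z2, p} \<le> 2"
          proof -
            have "R {e1, z2, p} \<le> R (Y - {z1, f, e2})" by (rule mono) (use e1Y z2Y pY z12 fp e2 e1 z1S z2S fT pT z1 z2 pS fS in auto)
            thus ?thesis using x1 x1e RY3 by simp
          qed
          have l2: "R {e2, z1, p} \<le> 2"
          proof -
            have "R {e2, z1, p} \<le> R (Y - {z2, f, e1})" by (rule mono) (use e2Y z1Y pY z12 fp e2 e1 z1S z2S fT pT z1 z2 pS fS in auto)
            thus ?thesis using x2 x2e RY3 by simp
          qed
          have A: "R {f, z1, z2} = 3"
          proof (rule ccontr)
            assume "R {f, z1, z2} \<noteq> 3"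
            moreover have "R {f, z1, z2} \<le> 3" using cardle[of "{f, z1, z2}"] fY z1Y z2Y card3_le[of f z1 z2] by simp
            ultimately have le: "R {f, z1, z2} \<le> 2" by simp
            have u1: "R ({f, z1, z2} \<union> {f, z1, e1}) \<le> R {f, z1, z2} + R {f, z1, e1} - R {f, z1}"
              by (rule merge) (use fY z1Y z2Y e1Y in auto)
            have u2: "R (({f, z1, z2} \<union> {f, z1, e1}) \<union> {f, z2, e2}) \<le> R ({f, z1, z2} \<union> {f, z1, e1}) + R {f, z2, e2} - R {f, z2}"
              by (rule merge) (use fY z1Y z2Y e1Y e2Y in auto)
            have u3: "R {f, e1, e2} \<le> R (({f, z1, z2} \<union> {f, z1, e1}) \<union> {f, z2, e2})"
              by (rule mono) (use fY z1Y z2Y e1Y e2Y in auto)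
            show False using le u1 u2 u3 z1 z2 fe12 by simp
          qed
          have rpz1: "R {p, z1} = 2"
          proof (rule ccontr)
            assume ne: "R {p, z1} \<noteq> 2"
            have "R {p, z1} \<le> R {z1} + 1" using ins2[of "{z1}" p] z1Y pY by simp
            moreover have "R {p} \<le> R {p, z1}" by (rule mono) (use pY z1Y in auto)
            ultimately have le: "R {p, z1} \<le> 1" using ne rp z1(6) by simp
            have u: "R ({p, z1} \<union> {f, z1, e1}) \<le> R {p, z1} + R {f, z1, e1} - R {z1}"
              by (rule merge) (use fY z1Y pY e1Y in auto)
            have v: "R {f, p, e1} \<le> R ({p, z1} \<union> {f, z1, e1})" by (rule mono) (use fY z1Y pY e1Y in auto)
            show False using le u v z1 fpe1 by simp
          qed
          have rpz2: "R {p, z2} = 2"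
          proof (rule ccontr)
            assume ne: "R {p, z2} \<noteq> 2"
            have "R {p, z2} \<le> R {z2} + 1" using ins2[of "{z2}" p] z2Y pY by simp
            moreover have "R {p} \<le> R {p, z2}" by (rule mono) (use pY z2Y in auto)
            ultimately have le: "R {p, z2} \<le> 1" using ne rp z2(6) by simp
            have u: "R ({p, z2} \<union> {f, z2, e2}) \<le> R {p, z2} + R {f, z2, e2} - R {z2}"
              by (rule merge) (use fY z2Y pY e2Y in auto)
            have v: "R {f, p, e2} \<le> R ({p, z2} \<union> {f, z2, e2})" by (rule mono) (use fY z2Y pY e2Y in auto)
            show False using le u v z2 fpe2 by simp
          qed
          have B: "R {p, z1, z2} = 3"
          proof (rule ccontr)
            assume "R {p, z1, z2} \<noteq> 3"
            moreover have "R {p, z1, z2} \<le> 3" using cardle[of "{p, z1, z2}"] pY z1Y z2Y card3_le[of p z1 z2] by simp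
            ultimately have le: "R {p, z1, z2} \<le> 2" by simp
            have u1: "R ({p, z1, z2} \<union> {e2, z1, p}) \<le> R {p, z1, z2} + R {e2, z1, p} - R {p, z1}"
              by (rule merge) (use pY z1Y z2Y e2Y in auto)
            have u2: "R (({p, z1, z2} \<union> {e2, z1, p}) \<union> {e1, z2, p}) \<le> R ({p, z1, z2} \<union> {e2, z1, p}) + R {e1, z2, p} - R {p, z2}"
              by (rule merge) (use pY z1Y z2Y e1Y e2Y in auto)
            have u3: "R {p, e1, e2} \<le> R (({p, z1, z2} \<union> {e2, z1, p}) \<union> {e1, z2, p})"
              by (rule mono) (use pY z1Y z2Y e1Y e2Y in auto)
            show False using le u1 u2 u3 l1 l2 rpz1 rpz2 pe12 by simp
          qed
          have C: "R {z1, z2} = 2"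
          proof -
            have "R {z1, z2} \<le> 2" using cardle[of "{z1, z2}"] z1Y z2Y z12 by simp
            moreover have "R {f, z1, z2} \<le> R {z1, z2} + 1" using ins2[of "{z1, z2}" f] z1Y z2Y fY by simp
            ultimately show ?thesis using A by simp
          qed
          have D: "R {f, p, z1, z2} = 3"
          proof -
            have "R {f, z1, z2} \<le> R {f, p, z1, z2}" by (rule mono) (use fY pY z1Y z2Y in auto)
            moreover have "R {f, p, z1, z2} \<le> R Y" by (rule mono) (use fY pY z1Y z2Y in auto)
            ultimately show ?thesis using A RY3 by simp
          qed
          have "Pk R f p {z1, z2}" unfolding Pk_def using A B C D by simp
          moreover have "{z1, z2} \<subseteq> X" using z1 z2 T_def by blast
          ultimately have "{z1, z2} = S" using uniq[of "{z1, z2}"] by blast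
          thus False using z1S by blast
        qed
      qed
    qed
  qed
qed




lemma sep_beta_le:
  assumes "matroid M" "A \<inter> B = {}" "A \<union> B = ground M" "W \<subseteq> B"
  shows "rank M W + rank M (ground M) \<le> rank M B + rank M (A \<union> W)"
proof -
  have "rank M (B \<union> (A \<union> W)) + rank M (B \<inter> (A \<union> W)) \<le> rank M B + rank M (A \<union> W)"
    by (rule rank_submod[OF assms(1)])
  moreover have "B \<union> (A \<union> W) = ground M" using assms by blast
  moreover have "B \<inter> (A \<union> W) = W" using assms by blast
  ultimately show ?thesis by simp
qed

lemma sep_beta_ge:
  assumes "matroid M" "A \<inter> B = {}" "W \<subseteq> B"
  shows "rank M (A \<union> W) \<le> rank M A + rank M W"
proof -
  have "rank M (A \<union> W) + rank M (A \<inter> W) \<le> rank M A + rank M W" by (rule rank_submod[OF assms(1)])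
  thus ?thesis by simp
qed

definition PM :: "'a matroid \<Rightarrow> 'a set \<Rightarrow> 'a \<Rightarrow> 'a set \<Rightarrow> bool" where
  "PM M A f S \<longleftrightarrow> rank M (insert f S) = rank M S + 1 \<and> rank M (A \<union> S) = rank M A + rank M S
      \<and> rank M (insert f (A \<union> S)) = rank M A + rank M S"

lemma pm_rank:
  assumes "matroid M" "A \<inter> B = {}" "A \<union> B = ground M" "rank M A + rank M B \<le> rank M (ground M) + 1"
    "f \<in> B" "S \<subseteq> B" "PM M A f S" "Y \<subseteq> A"
  shows "rank M (Y \<union> S) = rank M Y + rank M S"
    "rank M (insert f (Y \<union> S)) + rank M B = rank M S + 1 + rank M (Y \<union> B)"
proof -
  have P1: "rank M (insert f S) = rank M S + 1" and P2: "rank M (A \<union> S) = rank M A + rank M S"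
    and P3: "rank M (insert f (A \<union> S)) = rank M A + rank M S" using assms(7) unfolding PM_def by auto
  have YB: "Y \<inter> B = {}" using assms(2,8) by blast
  have SA: "S \<inter> A = {}" using assms(2,6) by blast
  show "rank M (Y \<union> S) = rank M Y + rank M S"
  proof -
    have "rank M ((Y \<union> S) \<union> A) + rank M ((Y \<union> S) \<inter> A) \<le> rank M (Y \<union> S) + rank M A" by (rule rank_submod[OF assms(1)])
    moreover have "(Y \<union> S) \<union> A = A \<union> S" using assms(8) by blast
    moreover have "(Y \<union> S) \<inter> A = Y" using assms(8) SA by blast
    moreover have "rank M (Y \<union> S) + rank M (Y \<inter> S) \<le> rank M Y + rank M S" by (rule rank_submod[OF assms(1)])
    moreover have "Y \<inter> S = {}" using YB assms(6) by blast
    ultimately show ?thesis using P2 rank_empty[OF assms(1)] by simp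
  qed
  let ?Z = "insert f S"
  have ZB: "?Z \<subseteq> B" using assms(5,6) by blast
  have AZ: "A \<union> ?Z = insert f (A \<union> S)" by blast
  have lam: "rank M A + rank M B = rank M (ground M) + 1"
  proof -
    have "rank M ?Z + rank M (ground M) \<le> rank M B + rank M (A \<union> ?Z)" using sep_beta_le[OF assms(1-3) ZB] .
    moreover have "rank M (A \<union> ?Z) = rank M A + rank M S" using P3 AZ by (simp only:)
    ultimately show ?thesis using P1 assms(4) by linarith
  qed
  have lo: "rank M (Y \<union> B) + rank M ?Z \<le> rank M (Y \<union> ?Z) + rank M B"
  proof -
    have "rank M ((Y \<union> ?Z) \<union> B) + rank M ((Y \<union> ?Z) \<inter> B) \<le> rank M (Y \<union> ?Z) + rank M B" by (rule rank_submod[OF assms(1)])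
    moreover have "(Y \<union> ?Z) \<union> B = Y \<union> B" using ZB by blast
    moreover have "(Y \<union> ?Z) \<inter> B = ?Z" using ZB YB by blast
    ultimately show ?thesis by simp
  qed
  have up: "rank M (ground M) + rank M (Y \<union> ?Z) \<le> rank M (Y \<union> B) + rank M (A \<union> ?Z)"
  proof -
    have "rank M ((Y \<union> B) \<union> (A \<union> ?Z)) + rank M ((Y \<union> B) \<inter> (A \<union> ?Z)) \<le> rank M (Y \<union> B) + rank M (A \<union> ?Z)" by (rule rank_submod[OF assms(1)])
    moreover have "(Y \<union> B) \<union> (A \<union> ?Z) = ground M" using assms(3,8) ZB by blast
    moreover have "(Y \<union> B) \<inter> (A \<union> ?Z) = Y \<union> ?Z" using assms(2,8) ZB by blast
    ultimately show ?thesis by simp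
  qed
  have e: "insert f (Y \<union> S) = Y \<union> ?Z" by blast
  have x1: "rank M (A \<union> ?Z) = rank M A + rank M S" using P3 AZ by (simp only:)
  have x2: "rank M (insert f (Y \<union> S)) = rank M (Y \<union> ?Z)" using e by (simp only:)
  show "rank M (insert f (Y \<union> S)) + rank M B = rank M S + 1 + rank M (Y \<union> B)"
    using lo up x1 x2 P1 lam by linarith
qed

lemma pm_cond:
  assumes "matroid M" "A \<inter> B = {}" "A \<union> B = ground M" "rank M A + rank M B \<le> rank M (ground M) + 1"
    "f \<in> B" "S \<subseteq> B" "PM M A f S" "CA \<subseteq> A" "I - {f} \<subseteq> A"
  shows "(rank M (I \<union> (CA \<union> S)) = card I + rank M (CA \<union> S)) \<longleftrightarrow>
    (if f \<in> I then 1 + rank M ((I - {f}) \<union> CA \<union> B) = card I + rank M CA + rank M B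
     else rank M ((I - {f}) \<union> CA) = card I + rank M CA)"
proof -
  let ?Y = "(I - {f}) \<union> CA"
  have Y: "?Y \<subseteq> A" using assms(8,9) by blast
  have c: "rank M (CA \<union> S) = rank M CA + rank M S" using pm_rank(1)[OF assms(1-7) assms(8)] .
  show ?thesis
  proof (cases "f \<in> I")
    case True
    have e: "I \<union> (CA \<union> S) = insert f (?Y \<union> S)" using True by blast
    have r: "rank M (insert f (?Y \<union> S)) + rank M B = rank M S + 1 + rank M (?Y \<union> B)"
      using pm_rank(2)[OF assms(1-7) Y] .
    have e2: "?Y \<union> B = (I - {f}) \<union> CA \<union> B" by blast
    have r': "rank M (I \<union> (CA \<union> S)) + rank M B = rank M S + 1 + rank M ((I - {f}) \<union> CA \<union> B)"
      using r e e2 by (simp only:)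
    have "(rank M (I \<union> (CA \<union> S)) = card I + rank M (CA \<union> S)) \<longleftrightarrow>
          (1 + rank M ((I - {f}) \<union> CA \<union> B) = card I + rank M CA + rank M B)"
      using r' c by linarith
    thus ?thesis using True by simp
  next
    case False
    have e: "I \<union> (CA \<union> S) = ?Y \<union> S" using False by blast
    have r: "rank M (?Y \<union> S) = rank M ?Y + rank M S" using pm_rank(1)[OF assms(1-7) Y] .
    have r': "rank M (I \<union> (CA \<union> S)) = rank M ?Y + rank M S" using r e by (simp only:)
    have "(rank M (I \<union> (CA \<union> S)) = card I + rank M (CA \<union> S)) \<longleftrightarrow>
          (rank M ((I - {f}) \<union> CA) = card I + rank M CA)"
      using r' c by linarith
    thus ?thesis using False by simp
  qed
qed

lemma minor_replace:
  assumes "matroid M" "A \<inter> B = {}" "A \<union> B = ground M" "rank M A + rank M B \<le> rank M (ground M) + 1"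
    "f \<in> B" "S1 \<subseteq> B - {f}" "S2 \<subseteq> B - {f}" "PM M A f S1" "PM M A f S2" "CA \<subseteq> A" "DA \<subseteq> A"
  shows "deletion (contraction M (CA \<union> S1)) (DA \<union> ((B - {f}) - S1))
       = deletion (contraction M (CA \<union> S2)) (DA \<union> ((B - {f}) - S2))"
proof (rule meq)
  show "ground (deletion (contraction M (CA \<union> S1)) (DA \<union> ((B - {f}) - S1)))
      = ground (deletion (contraction M (CA \<union> S2)) (DA \<union> ((B - {f}) - S2)))"
    using assms(6,7) by auto
  show "indep (deletion (contraction M (CA \<union> S1)) (DA \<union> ((B - {f}) - S1)))
      = indep (deletion (contraction M (CA \<union> S2)) (DA \<union> ((B - {f}) - S2)))"
  proof (rule ext)
    fix I
    show "indep (deletion (contraction M (CA \<union> S1)) (DA \<union> ((B - {f}) - S1))) I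
      = indep (deletion (contraction M (CA \<union> S2)) (DA \<union> ((B - {f}) - S2))) I"
    proof (cases "I \<subseteq> ground M - (CA \<union> S1) - (DA \<union> ((B - {f}) - S1))")
      case True
      have IA: "I - {f} \<subseteq> A" using True assms(2,3,5) by blast
      have T2: "I \<subseteq> ground M - (CA \<union> S2) - (DA \<union> ((B - {f}) - S2))" using True assms(6,7) by blast
      have s1: "S1 \<subseteq> B" and s2: "S2 \<subseteq> B" using assms(6,7) by auto
      note c1 = pm_cond[OF assms(1-5) s1 assms(8) assms(10) IA]
      note c2 = pm_cond[OF assms(1-5) s2 assms(9) assms(10) IA]
      have a1: "I \<subseteq> ground M - (CA \<union> S1)" using True by blast
      have a2: "I \<subseteq> ground M - (CA \<union> S2)" using T2 by blast
      have d1: "indep (deletion (contraction M (CA \<union> S1)) (DA \<union> ((B - {f}) - S1))) I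
          = (rank M (I \<union> (CA \<union> S1)) = card I + rank M (CA \<union> S1))" using True a1 by simp
      have d2: "indep (deletion (contraction M (CA \<union> S2)) (DA \<union> ((B - {f}) - S2))) I
          = (rank M (I \<union> (CA \<union> S2)) = card I + rank M (CA \<union> S2))" using T2 a2 by simp
      show ?thesis unfolding d1 d2 using c1 c2 by (simp only:)
    next
      case False
      have F2: "\<not> I \<subseteq> ground M - (CA \<union> S2) - (DA \<union> ((B - {f}) - S2))" using False assms(6,7) by blast
      show ?thesis using False F2 by simp
    qed
  qed
qed




definition sbs :: "'a option set \<Rightarrow> 'a set" where "sbs Z = {x. Some x \<in> Z}"

lemma sbs_empty[simp]: "sbs {} = {}" by (simp add: sbs_def)
lemma sbs_None[simp]: "sbs (insert None Z) = sbs Z" by (simp add: sbs_def)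
lemma sbs_Some[simp]: "sbs (insert (Some y) Z) = insert y (sbs Z)" by (auto simp add: sbs_def)
lemma sbs_Un[simp]: "sbs (Z \<union> W) = sbs Z \<union> sbs W" by (auto simp add: sbs_def)
lemma sbs_Int[simp]: "sbs (Z \<inter> W) = sbs Z \<inter> sbs W" by (auto simp add: sbs_def)
lemma sbs_img[simp]: "sbs (Some ` S) = S" by (auto simp add: sbs_def)
lemma sbs_Diff[simp]: "sbs (Z - W) = sbs Z - sbs W" by (auto simp add: sbs_def)
lemma sbs_sub: "Z \<subseteq> insert None (Some ` B) \<Longrightarrow> sbs Z \<subseteq> B" by (auto simp add: sbs_def)

definition Rk :: "'a matroid \<Rightarrow> 'a set \<Rightarrow> 'a option set \<Rightarrow> int" where
  "Rk M A Z = (if None \<in> Z then int (rank M (A \<union> sbs Z)) - int (rank M A) + 1 else int (rank M (sbs Z)))"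

lemma rkf_Rk:
  assumes "matroid M" "A \<inter> B = {}" "A \<union> B = ground M" "rank M A + rank M B \<le> rank M (ground M) + 1"
  shows "rkf (insert None (Some ` B)) (Rk M A)"
  unfolding rkf_def
proof (intro conjI)
  show "Rk M A {} = 0" by (simp add: Rk_def rank_empty[OF assms(1)])
next
  show "\<forall>Z x. Z \<subseteq> insert None (Some ` B) \<longrightarrow> x \<in> insert None (Some ` B) \<longrightarrow>
     Rk M A Z \<le> Rk M A (insert x Z) \<and> Rk M A (insert x Z) \<le> Rk M A Z + 1"
  proof (intro allI impI)
  fix Z x assume Z: "Z \<subseteq> insert None (Some ` B)" and x: "x \<in> insert None (Some ` B)"
  have W: "sbs Z \<subseteq> B" using sbs_sub[OF Z] .
  have b1: "rank M (sbs Z) + rank M (ground M) \<le> rank M B + rank M (A \<union> sbs Z)" using sep_beta_le[OF assms(1-3) W] .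
  have b2: "rank M (A \<union> sbs Z) \<le> rank M A + rank M (sbs Z)" using sep_beta_ge[OF assms(1,2) W] .
  show "Rk M A Z \<le> Rk M A (insert x Z) \<and> Rk M A (insert x Z) \<le> Rk M A Z + 1"
  proof (cases x)
    case None
    show ?thesis
    proof (cases "None \<in> Z")
      case True
      then have "insert x Z = Z" using None by blast
      thus ?thesis by simp
    next
      case False
      have r1: "Rk M A (insert x Z) = int (rank M (A \<union> sbs Z)) - int (rank M A) + 1" using None by (simp add: Rk_def)
      have r2: "Rk M A Z = int (rank M (sbs Z))" using False by (simp add: Rk_def)
      show ?thesis using r1 r2 b1 b2 assms(4) by linarith
    qed
  next
    case (Some y)
    show ?thesis
    proof (cases "None \<in> Z")
      case True
      have r1: "Rk M A (insert x Z) = int (rank M (insert y (A \<union> sbs Z))) - int (rank M A) + 1"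
        using True Some by (simp add: Rk_def)
      have r2: "Rk M A Z = int (rank M (A \<union> sbs Z)) - int (rank M A) + 1" using True by (simp add: Rk_def)
      have m1: "rank M (A \<union> sbs Z) \<le> rank M (insert y (A \<union> sbs Z))" by (rule rank_mono[OF assms(1)]) blast
      have m2: "rank M (insert y (A \<union> sbs Z)) \<le> rank M (A \<union> sbs Z) + 1" by (rule rank_insert_le[OF assms(1)])
      show ?thesis using r1 r2 m1 m2 by linarith
    next
      case False
      have r1: "Rk M A (insert x Z) = int (rank M (insert y (sbs Z)))"
        using False Some by (simp add: Rk_def)
      have r2: "Rk M A Z = int (rank M (sbs Z))" using False by (simp add: Rk_def)
      have m1: "rank M (sbs Z) \<le> rank M (insert y (sbs Z))" by (rule rank_mono[OF assms(1)]) blast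
      have m2: "rank M (insert y (sbs Z)) \<le> rank M (sbs Z) + 1" by (rule rank_insert_le[OF assms(1)])
      show ?thesis using r1 r2 m1 m2 by linarith
    qed
  qed
  qed
next
  show "\<forall>Z W. Z \<subseteq> insert None (Some ` B) \<longrightarrow> W \<subseteq> insert None (Some ` B) \<longrightarrow>
     Rk M A (Z \<union> W) + Rk M A (Z \<inter> W) \<le> Rk M A Z + Rk M A W"
  proof (intro allI impI)
  fix Z W assume Z: "Z \<subseteq> insert None (Some ` B)" and W: "W \<subseteq> insert None (Some ` B)"
  have z: "sbs Z \<subseteq> B" and w: "sbs W \<subseteq> B" using sbs_sub Z W by auto
  let ?z = "sbs Z" and ?w = "sbs W"
  show "Rk M A (Z \<union> W) + Rk M A (Z \<inter> W) \<le> Rk M A Z + Rk M A W"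
  proof (cases "None \<in> Z"; cases "None \<in> W")
    assume a: "None \<in> Z" "None \<in> W"
    have "rank M ((A \<union> ?z) \<union> (A \<union> ?w)) + rank M ((A \<union> ?z) \<inter> (A \<union> ?w)) \<le> rank M (A \<union> ?z) + rank M (A \<union> ?w)"
      by (rule rank_submod[OF assms(1)])
    moreover have "(A \<union> ?z) \<union> (A \<union> ?w) = A \<union> (?z \<union> ?w)" by blast
    moreover have "(A \<union> ?z) \<inter> (A \<union> ?w) = A \<union> (?z \<inter> ?w)" by blast
    ultimately have h: "rank M (A \<union> (?z \<union> ?w)) + rank M (A \<union> (?z \<inter> ?w)) \<le> rank M (A \<union> ?z) + rank M (A \<union> ?w)" by simp
    have r: "Rk M A (Z \<union> W) = int (rank M (A \<union> (?z \<union> ?w))) - int (rank M A) + 1"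
      "Rk M A (Z \<inter> W) = int (rank M (A \<union> (?z \<inter> ?w))) - int (rank M A) + 1"
      "Rk M A Z = int (rank M (A \<union> ?z)) - int (rank M A) + 1"
      "Rk M A W = int (rank M (A \<union> ?w)) - int (rank M A) + 1" using a by (simp_all add: Rk_def)
    show ?thesis using r h by linarith
  next
    assume a: "None \<in> Z" "None \<notin> W"
    have "rank M ((A \<union> ?z) \<union> ?w) + rank M ((A \<union> ?z) \<inter> ?w) \<le> rank M (A \<union> ?z) + rank M ?w"
      by (rule rank_submod[OF assms(1)])
    moreover have "(A \<union> ?z) \<union> ?w = A \<union> (?z \<union> ?w)" by blast
    moreover have "(A \<union> ?z) \<inter> ?w = ?z \<inter> ?w" using w assms(2) by blast
    ultimately have h: "rank M (A \<union> (?z \<union> ?w)) + rank M (?z \<inter> ?w) \<le> rank M (A \<union> ?z) + rank M ?w" by simp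
    have r: "Rk M A (Z \<union> W) = int (rank M (A \<union> (?z \<union> ?w))) - int (rank M A) + 1"
      "Rk M A (Z \<inter> W) = int (rank M (?z \<inter> ?w))"
      "Rk M A Z = int (rank M (A \<union> ?z)) - int (rank M A) + 1"
      "Rk M A W = int (rank M ?w)" using a by (simp_all add: Rk_def)
    show ?thesis using r h by linarith
  next
    assume a: "None \<notin> Z" "None \<in> W"
    have "rank M ((A \<union> ?w) \<union> ?z) + rank M ((A \<union> ?w) \<inter> ?z) \<le> rank M (A \<union> ?w) + rank M ?z"
      by (rule rank_submod[OF assms(1)])
    moreover have "(A \<union> ?w) \<union> ?z = A \<union> (?z \<union> ?w)" by blast
    moreover have "(A \<union> ?w) \<inter> ?z = ?z \<inter> ?w" using z assms(2) by blast
    ultimately have h: "rank M (A \<union> (?z \<union> ?w)) + rank M (?z \<inter> ?w) \<le> rank M (A \<union> ?w) + rank M ?z" by simp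
    have r: "Rk M A (Z \<union> W) = int (rank M (A \<union> (?z \<union> ?w))) - int (rank M A) + 1"
      "Rk M A (Z \<inter> W) = int (rank M (?z \<inter> ?w))"
      "Rk M A W = int (rank M (A \<union> ?w)) - int (rank M A) + 1"
      "Rk M A Z = int (rank M ?z)" using a by (simp_all add: Rk_def)
    show ?thesis using r h by linarith
  next
    assume a: "None \<notin> Z" "None \<notin> W"
    have h: "rank M (?z \<union> ?w) + rank M (?z \<inter> ?w) \<le> rank M ?z + rank M ?w" by (rule rank_submod[OF assms(1)])
    have r: "Rk M A (Z \<union> W) = int (rank M (?z \<union> ?w))"
      "Rk M A (Z \<inter> W) = int (rank M (?z \<inter> ?w))"
      "Rk M A W = int (rank M ?w)"
      "Rk M A Z = int (rank M ?z)" using a by (simp_all add: Rk_def)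
    show ?thesis using r h by linarith
  qed
  qed
qed

lemma Rk_Pk:
  assumes "f \<notin> S"
  shows "Pk (Rk M A) (Some f) None (Some ` S) \<longleftrightarrow> PM M A f S"
proof -
  have a: "Rk M A (insert (Some f) (Some ` S)) = int (rank M (insert f S))" by (simp add: Rk_def)
  have b: "Rk M A (Some ` S) = int (rank M S)" by (simp add: Rk_def)
  have c: "Rk M A (insert None (Some ` S)) = int (rank M (A \<union> S)) - int (rank M A) + 1" by (simp add: Rk_def)
  have d: "Rk M A (insert (Some f) (insert None (Some ` S))) = int (rank M (insert f (A \<union> S))) - int (rank M A) + 1"
    by (simp add: Rk_def)
  show ?thesis unfolding Pk_def PM_def a b c d by linarith
qed



theorem lemma2p17:
  fixes M N :: "'a matroid" and A B :: "'a set" and f :: 'a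
  assumes "matroid M"
    and "connected M"
    and "is_minor N M"
    and "\<forall>e \<in> ground N. \<not> loop N e \<and> \<not> coloop N e"
    and "two_separation M A B"
    and "B \<inter> ground N = {f}"
    and "\<forall>g \<in> ground M. \<not> in_series M f g \<and> \<not> in_parallel M f g"
  shows "\<exists>e \<in> B - {f}. is_minor N (deletion M {e}) \<and> is_minor N (contraction M {e})"
proof -
  note M = assms(1)
  let ?E = "ground M"
  obtain C D where CD: "C \<subseteq> ?E" "D \<subseteq> ?E" "C \<inter> D = {}" "N = deletion (contraction M C) D"
    using assms(3) unfolding is_minor_def by blast
  have AB: "A \<inter> B = {}" "A \<union> B = ?E" "card A \<ge> 2" "card B \<ge> 2" "conn_fn M A < 2"
    using assms(5) unfolding two_separation_def by auto
  have BA: "?E - A = B" using AB by blast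
  have lam: "rank M A + rank M B \<le> rank M ?E + 1"
    using AB(5) BA unfolding conn_fn_def by simp
  have fG: "f \<in> ground N" and fB: "f \<in> B" using assms(6) by auto
  have GN: "ground N = ?E - C - D" using CD by simp
  have fC: "f \<notin> C" and fD: "f \<notin> D" using fG GN by auto
  have nl: "\<not> loop N f" and ncl: "\<not> coloop N f" using assms(4) fG by auto
  have L: "rank M (insert f C) = rank M C + 1" by (rule minor_nonloop[OF M CD(4) fG nl])
  have CL: "rank M (insert f ((ground N - {f}) \<union> C)) = rank M ((ground N - {f}) \<union> C)"
    by (rule minor_noncoloop[OF M CD(1) CD(4) fG ncl])
  define X where "X = B - {f}"
  define CA where "CA = C \<inter> A"
  define CX where "CX = C \<inter> B"
  define DA where "DA = D \<inter> A"
  have CXX: "CX \<subseteq> X" using CX_def X_def fC by blast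
  have XCD: "X \<subseteq> C \<union> D"
  proof
    fix x assume x: "x \<in> X"
    show "x \<in> C \<union> D"
    proof (rule ccontr)
      assume "x \<notin> C \<union> D"
      hence "x \<in> ground N" using x X_def AB(2) GN by blast
      hence "x \<in> B \<inter> ground N" using x X_def by blast
      thus False using assms(6) x X_def by blast
    qed
  qed
  have Ceq: "C = CA \<union> CX" using CA_def CX_def CD(1) AB(2) by blast
  have Deq: "D = DA \<union> (X - CX)"
  proof
    show "D \<subseteq> DA \<union> (X - CX)" using DA_def X_def CX_def CD(2,3) AB(2) fD by blast
    show "DA \<union> (X - CX) \<subseteq> D" using DA_def X_def CX_def XCD by blast
  qed
  have Nrep: "N = deletion (contraction M (CA \<union> CX)) (DA \<union> (X - CX))" using CD(4) Ceq Deq by simp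
  have CAA: "CA \<subseteq> A" and DAA: "DA \<subseteq> A" using CA_def DA_def by auto
  have CXB: "CX \<subseteq> B" using CX_def by auto
  have PM0: "PM M A f CX"
  proof -
    have rho: "rank M (insert f CX) = rank M CX + 1"
    proof (rule ccontr)
      assume ne: "rank M (insert f CX) \<noteq> rank M CX + 1"
      have "rank M (insert f CX) \<le> rank M CX + 1" by (rule rank_insert_le[OF M])
      moreover have "rank M CX \<le> rank M (insert f CX)" by (rule rank_mono[OF M]) blast
      ultimately have eq: "rank M (insert f CX) = rank M CX" using ne by simp
      have "CX \<subseteq> C" using CX_def by blast
      from rank_cl_mono[OF M this eq] show False using L by simp
    qed
    have sub: "(ground N - {f}) \<union> C \<subseteq> A \<union> CX"
    proof -
      have "ground N - {f} \<subseteq> A" using assms(6) GN AB(2) by blast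
      thus ?thesis using Ceq CA_def by blast
    qed
    have fcl: "rank M (insert f (A \<union> CX)) = rank M (A \<union> CX)" by (rule rank_cl_mono[OF M sub CL])
    have ZB: "insert f CX \<subseteq> B" using fB CXB by blast
    have b1: "rank M (insert f CX) + rank M ?E \<le> rank M B + rank M (A \<union> insert f CX)"
      using sep_beta_le[OF M AB(1,2) ZB] .
    have e1: "A \<union> insert f CX = insert f (A \<union> CX)" by blast
    have b1': "rank M (insert f CX) + rank M ?E \<le> rank M B + rank M (A \<union> CX)" using b1 e1 fcl by (simp only:)
    have b2: "rank M (A \<union> CX) \<le> rank M A + rank M CX" using sep_beta_ge[OF M AB(1) CXB] .
    have a2: "rank M (A \<union> CX) = rank M A + rank M CX" using b1' b2 rho lam by linarith
    show ?thesis unfolding PM_def using rho a2 fcl by simp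
  qed
  let ?Y = "insert None (Some ` B)"
  let ?R = "Rk M A"
  have finB: "finite B" by (rule finite_subset[of B ?E]) (use AB(2) m_finite[OF M] in auto)
  have finY: "finite ?Y" using finB by simp
  have rk: "rkf ?Y ?R" by (rule rkf_Rk[OF M AB(1,2) lam])
  have fY: "Some f \<in> ?Y" using fB by simp
  have pY: "None \<in> ?Y" by simp
  have fp: "Some f \<noteq> None" by simp
  have Ydiff: "?Y - {Some f, None} = Some ` X" using X_def by auto
  have S0: "Some ` CX \<subseteq> ?Y - {Some f, None}" using Ydiff CXX by blast
  have fCX: "f \<notin> CX" using CX_def fC by blast
  have PS0: "Pk ?R (Some f) None (Some ` CX)" using Rk_Pk[OF fCX] PM0 by simp
  have Xne: "X \<noteq> {}"
  proof
    assume "X = {}"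
    hence "B \<subseteq> {f}" using X_def by blast
    hence "card B \<le> 1" using card_mono[of "{f}" B] by simp
    thus False using AB(4) by simp
  qed
  have Yne: "?Y - {Some f, None} \<noteq> {}" using Ydiff Xne by simp
  have nps: "\<not> (\<exists>x \<in> ?Y - {Some f, None}. parR ?R (Some f) x \<or> serR ?Y ?R (Some f) x)"
  proof
    assume "\<exists>x \<in> ?Y - {Some f, None}. parR ?R (Some f) x \<or> serR ?Y ?R (Some f) x"
    then obtain y where y: "y \<in> X" "parR ?R (Some f) (Some y) \<or> serR ?Y ?R (Some f) (Some y)"
      using Ydiff by auto
    have yB: "y \<in> B" and yf: "y \<noteq> f" using y X_def by auto
    have yE: "y \<in> ?E" and fE: "f \<in> ?E" using yB fB AB(2) by auto
    show False
    proof (cases "parR ?R (Some f) (Some y)")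
      case True
      hence "rank M {f} = 1" "rank M {y} = 1" "rank M {f, y} = 1"
        unfolding parR_def Rk_def by simp_all
      hence "in_parallel M f y" using in_parallel_of_rank[OF M fE yE yf[symmetric]] by simp
      thus False using assms(7) yE by blast
    next
      case False
      hence sr: "serR ?Y ?R (Some f) (Some y)" using y by blast
      have e1: "A \<union> sbs (?Y - {Some f, Some y}) = ?E - {f, y}" using AB(1,2) fB yB by (auto simp: sbs_def)
      have e2: "A \<union> sbs ?Y = ?E" using AB(2) by (auto simp: sbs_def)
      have e3: "A \<union> sbs (?Y - {Some f}) = ?E - {f}" using AB(1,2) fB by (auto simp: sbs_def)
      have e4: "A \<union> sbs (?Y - {Some y}) = ?E - {y}" using AB(1,2) yB by (auto simp: sbs_def)
      have r1: "?R (?Y - {Some f, Some y}) = int (rank M (?E - {f, y})) - int (rank M A) + 1"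
        unfolding Rk_def using e1 by simp
      have r2: "?R ?Y = int (rank M ?E) - int (rank M A) + 1" unfolding Rk_def using e2 by simp
      have r3: "?R (?Y - {Some f}) = int (rank M (?E - {f})) - int (rank M A) + 1" unfolding Rk_def using e3 by simp
      have r4: "?R (?Y - {Some y}) = int (rank M (?E - {y})) - int (rank M A) + 1" unfolding Rk_def using e4 by simp
      have q1: "rank M (?E - {f, y}) < rank M ?E" using sr r1 r2 unfolding serR_def by linarith
      have q2: "rank M (?E - {f}) = rank M ?E" using sr r3 r2 unfolding serR_def by linarith
      have q3: "rank M (?E - {y}) = rank M ?E" using sr r4 r2 unfolding serR_def by linarith
      have "in_series M f y" by (rule in_series_of_rank[OF M fE yE yf[symmetric] q1 q2 q3])
      thus False using assms(7) yE by blast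
    qed
  qed
  have "\<not> (\<forall>S'. S' \<subseteq> ?Y - {Some f, None} \<longrightarrow> Pk ?R (Some f) None S' \<longrightarrow> S' = Some ` CX)"
    using core[OF finY rk fY pY fp S0 PS0 _ Yne] nps by blast
  then obtain S' where S': "S' \<subseteq> ?Y - {Some f, None}" "Pk ?R (Some f) None S'" "S' \<noteq> Some ` CX" by blast
  define S1 where "S1 = sbs S'"
  have S'eq: "S' = Some ` S1" using S'(1) Ydiff unfolding S1_def sbs_def by auto
  have S1X: "S1 \<subseteq> X" using S'(1) Ydiff S'eq by auto
  have fS1: "f \<notin> S1" using S1X X_def by blast
  have PM1: "PM M A f S1" using Rk_Pk[OF fS1] S'(2) S'eq by simp
  have S1ne: "S1 \<noteq> CX" using S'(3) S'eq by blast
  have Nrep1: "N = deletion (contraction M (CA \<union> S1)) (DA \<union> (X - S1))"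
    using Nrep minor_replace[OF M AB(1,2) lam fB _ _ PM0 PM1 CAA DAA] CXX S1X X_def by simp
  have CDA: "CA \<inter> DA = {}" using CA_def DA_def CD(3) by blast
  have E1: "CA \<union> S1 \<subseteq> ?E" "DA \<union> (X - S1) \<subseteq> ?E" "(CA \<union> S1) \<inter> (DA \<union> (X - S1)) = {}"
    using CAA DAA S1X X_def AB(1,2) CDA by auto
  have E0: "CA \<union> CX \<subseteq> ?E" "DA \<union> (X - CX) \<subseteq> ?E" "(CA \<union> CX) \<inter> (DA \<union> (X - CX)) = {}"
    using CAA DAA CXX X_def AB(1,2) CDA by auto
  show ?thesis
  proof (cases "CX - S1 = {}")
    case False
    then obtain e where e: "e \<in> CX" "e \<notin> S1" by blast
    have eX: "e \<in> X" using e CXX by blast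
    have m1: "is_minor N (contraction M {e})" unfolding Nrep
      by (rule minor_con[OF M E0]) (use e in blast)
    have m2: "is_minor N (deletion M {e})" unfolding Nrep1
      by (rule minor_del[OF M E1]) (use e eX in blast)
    show ?thesis using m1 m2 eX X_def by blast
  next
    case True
    have "S1 - CX \<noteq> {}"
    proof
      assume "S1 - CX = {}"
      hence "S1 = CX" using True by blast
      thus False using S1ne by simp
    qed
    then obtain e where e: "e \<in> S1" "e \<notin> CX" by blast
    have eX: "e \<in> X" using e S1X by blast
    have m1: "is_minor N (contraction M {e})" unfolding Nrep1
      by (rule minor_con[OF M E1]) (use e in blast)
    have m2: "is_minor N (deletion M {e})" unfolding Nrep
      by (rule minor_del[OF M E0]) (use e eX in blast)
    show ?thesis using m1 m2 eX X_def by blast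
  qed
qed



end
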